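(* Let $\mathcal{C}=\mathsf{CSS}(A,B)$ be a non-splitting CSS code on $n$ qubits, and let $U$ be a unitary that is $1$-local-Clifford partially addressable on $\mathcal{C}$. Then any $1$-local Clifford circuit that realizes this partial addressing of $U$, written in the normal form $V\cdot Q$ (with $V=\bigotimes_i V_i$, each $V_i\in\{I,P,HP,PH,PHP,H\}$, and $Q$ a Pauli circuit), contains no $H$, $PH$, or $HP$ gates, i.e. $V_i\notin\{H,PH,HP\}$ for all $i$.
   Context: A CSS code $\mathsf{CSS}(A,B)$ on $n$ qubits is given by subspaces $A,B\subseteq\mathbb{F}_2^n$ with $a\cdot b=0$ for all $a\in A,b\in B$; its codespace is the common $+1$-eigenspace of all $X^a$ ($a\in A$) and $Z^b$ ($b\in B$), where for $a\in\mathbb{F}_2^n$ and a single-qubit gate $G$, $G^a=\bigotimes_{i:a_i=1}G_i$. A logical operator is a unitary preserving the codespace. For $a\in\mathbb{F}_2^n$ and $h\subseteq\{1,\dots,n\}$, $a\cap h$ is the vector with $(a\cap h)_i=1$ iff $a_i=1$ and $i\in h$. A subspace $A$ splits on a non-empty $h\subsetneq\{1,\dots,n\}$ if $A=A_1\oplus A_2$ where $A_1$ has support $h$ and $A_2$ is supported on the complement of $h$; the code splits on $h$ if both $A$ and $B$ split on $h$; it is non-splitting if it splits on no such $h$. $P=\mathrm{diag}(1,i)$ is the phase gate and $H$ the Hadamard gate. A $1$-local Clifford circuit is a tensor product of single-qubit Clifford gates; every such circuit equals, up to global phase, $V\cdot Q$ with $Q$ a Pauli circuit and $V$ a tensor product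 of gates from $\{I,P,HP,PH,PHP,H\}$. Fix a choice of logical Pauli operators $\bar X_j,\bar Z_j$ ($j=1,\dots,k$) for the $k$ logical qubits. A logical operator $G$ has logical action $\bar W$, for a $k$-qubit unitary $W=\sum_j\alpha_jW_j$ expanded in Paulis $W_j$, if $G|\psi\rangle=\sum_j\alpha_j\bar W_j|\psi\rangle$ for all codestates, where $\bar W_j$ is the corresponding product of the fixed logical Paulis. For a $p$-qubit unitary $U$ and a family $\mathcal{F}$ of circuits, $U$ is $\mathcal{F}$-partially addressable on $\mathcal{C}$ if there exist a set $I$ of pairwise disjoint ordered $p$-tuples of logical qubits with $I\neq\emptyset$ and $I$ not covering all logical qubits, and a logical operator in $\mathcal{F}$ whose logical action is $\bar U$ applied to each tuple of $I$ (and the identity on the remaining logical qubits). Here $\mathcal{F}$ is the family of $1$-local Clifford circuits. *)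

theory Defs
  imports Complex_Main
begin

text \<open>Qubits are indexed 0..n-1. A vector of F_2^n is a function nat => bool that is
  False outside {0..<n}.
  An n-qubit state is a complex function on bit vectors; an operator is given by its matrix
  entries (rows/columns indexed by bit vectors).\<close>

type_synonym bits = "nat \<Rightarrow> bool"
type_synonym qvec = "bits \<Rightarrow> complex"
type_synonym qmat = "bits \<Rightarrow> bits \<Rightarrow> complex"
type_synonym gate = "bool \<Rightarrow> bool \<Rightarrow> complex"

definition bvecs :: "nat \<Rightarrow> bits set" where
  "bvecs n = {x. \<forall>i. n \<le> i \<longrightarrow> \<not> x i}"

definition states :: "nat \<Rightarrow> qvec set" where
  "states n = {\<psi>. \<forall>x. x \<notin> bvecs n \<longrightarrow> \<psi> x = 0}"

definition app :: "nat \<Rightarrow> qmat \<Rightarrow> qvec \<Rightarrow> qvec" where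
  "app n M \<psi> = (\<lambda>x. if x \<in> bvecs n then (\<Sum>y\<in>bvecs n. M x y * \<psi> y) else 0)"

definition mat_mult :: "nat \<Rightarrow> qmat \<Rightarrow> qmat \<Rightarrow> qmat" where
  "mat_mult n M N = (\<lambda>x z. \<Sum>y\<in>bvecs n. M x y * N y z)"

definition unitary :: "nat \<Rightarrow> qmat \<Rightarrow> bool" where
  "unitary n M \<longleftrightarrow> (\<forall>x\<in>bvecs n. \<forall>z\<in>bvecs n.
      (\<Sum>y\<in>bvecs n. M x y * cnj (M z y)) = (if x = z then 1 else 0))"

definition gI :: gate where "gI a b = (if a = b then 1 else 0)"
definition gX :: gate where "gX a b = (if a \<noteq> b then 1 else 0)"
definition gY :: gate where
  "gY a b = (if a = b then 0 else if a then \<i> else - \<i>)"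
definition gZ :: gate where "gZ a b = (if a = b then (if a then -1 else 1) else 0)"
definition gP :: gate where "gP a b = (if a = b then (if a then \<i> else 1) else 0)"
definition gH :: gate where
  "gH a b = (if a \<and> b then -1 else 1) / complex_of_real (sqrt 2)"

definition gmul :: "gate \<Rightarrow> gate \<Rightarrow> gate" where
  "gmul G1 G2 = (\<lambda>a c. \<Sum>b\<in>UNIV. G1 a b * G2 b c)"

definition tensor :: "nat \<Rightarrow> (nat \<Rightarrow> gate) \<Rightarrow> qmat" where
  "tensor n G = (\<lambda>x y. \<Prod>i<n. G i (x i) (y i))"

definition gpow :: "nat \<Rightarrow> gate \<Rightarrow> bits \<Rightarrow> qmat" where
  "gpow n G a = tensor n (\<lambda>i. if a i then G else gI)"

definition bxor :: "bits \<Rightarrow> bits \<Rightarrow> bits" where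
  "bxor a b = (\<lambda>i. a i \<noteq> b i)"

definition dotp :: "nat \<Rightarrow> bits \<Rightarrow> bits \<Rightarrow> bool" where
  "dotp n a b = odd (card {i. i < n \<and> a i \<and> b i})"

definition f2_subspace :: "nat \<Rightarrow> bits set \<Rightarrow> bool" where
  "f2_subspace n A \<longleftrightarrow> A \<subseteq> bvecs n \<and> (\<lambda>_. False) \<in> A \<and>
     (\<forall>a\<in>A. \<forall>b\<in>A. bxor a b \<in> A)"

definition css_code :: "nat \<Rightarrow> bits set \<Rightarrow> bits set \<Rightarrow> bool" where
  "css_code n A B \<longleftrightarrow> f2_subspace n A \<and> f2_subspace n B \<and>
     (\<forall>a\<in>A. \<forall>b\<in>B. \<not> dotp n a b)"

definition codespace :: "nat \<Rightarrow> bits set \<Rightarrow> bits set \<Rightarrow> qvec set" where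
  "codespace n A B = {\<psi> \<in> states n.
      (\<forall>a\<in>A. app n (gpow n gX a) \<psi> = \<psi>) \<and> (\<forall>b\<in>B. app n (gpow n gZ b) \<psi> = \<psi>)}"

definition logical_op :: "nat \<Rightarrow> bits set \<Rightarrow> bits set \<Rightarrow> qmat \<Rightarrow> bool" where
  "logical_op n A B M \<longleftrightarrow> unitary n M \<and>
     (\<forall>\<psi>\<in>codespace n A B. app n M \<psi> \<in> codespace n A B)"

definition splits_on :: "nat \<Rightarrow> bits set \<Rightarrow> nat set \<Rightarrow> bool" where
  "splits_on n A h \<longleftrightarrow> (\<exists>A1 A2. f2_subspace n A1 \<and> f2_subspace n A2 \<and>
      (\<forall>a\<in>A1. \<forall>i. a i \<longrightarrow> i \<in> h) \<and> (\<forall>a\<in>A2. \<forall>i. a i \<longrightarrow> i \<notin> h) \<and>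
      A = {bxor a1 a2 | a1 a2. a1 \<in> A1 \<and> a2 \<in> A2})"

definition non_splitting :: "nat \<Rightarrow> bits set \<Rightarrow> bits set \<Rightarrow> bool" where
  "non_splitting n A B \<longleftrightarrow> (\<forall>h. h \<noteq> {} \<and> h \<subset> {0..<n} \<longrightarrow>
      \<not> (splits_on n A h \<and> splits_on n B h))"

definition is_pauli :: "nat \<Rightarrow> qmat \<Rightarrow> bool" where
  "is_pauli n M \<longleftrightarrow> (\<exists>m::nat. \<exists>a\<in>bvecs n. \<exists>b\<in>bvecs n.
      M = (\<lambda>x y. \<i> ^ m * mat_mult n (gpow n gX a) (gpow n gZ b) x y))"

text \<open>A choice of logical Paulis LX j, LZ j (j < k) for the k logical qubits of CSS(A,B):
  k = n - dim A - dim B, each is an n-qubit Pauli operator preserving the codespace, and on the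
  codespace they satisfy the k-qubit Pauli relations.\<close>
definition logical_paulis ::
  "nat \<Rightarrow> bits set \<Rightarrow> bits set \<Rightarrow> nat \<Rightarrow> (nat \<Rightarrow> qmat) \<Rightarrow> (nat \<Rightarrow> qmat) \<Rightarrow> bool" where
  "logical_paulis n A B k LX LZ \<longleftrightarrow>
     2 ^ k * card A * card B = 2 ^ n \<and>
     (\<forall>j<k. is_pauli n (LX j) \<and> is_pauli n (LZ j) \<and>
            logical_op n A B (LX j) \<and> logical_op n A B (LZ j)) \<and>
     (\<forall>\<psi>\<in>codespace n A B. \<forall>j<k.
        app n (LX j) (app n (LX j) \<psi>) = \<psi> \<and>
        app n (LZ j) (app n (LZ j) \<psi>) = \<psi> \<and>
        app n (LX j) (app n (LZ j) \<psi>) = - app n (LZ j) (app n (LX j) \<psi>) \<and>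
        (\<forall>l<k. l \<noteq> j \<longrightarrow>
           app n (LX j) (app n (LX l) \<psi>) = app n (LX l) (app n (LX j) \<psi>) \<and>
           app n (LZ j) (app n (LZ l) \<psi>) = app n (LZ l) (app n (LZ j) \<psi>) \<and>
           app n (LX j) (app n (LZ l) \<psi>) = app n (LZ l) (app n (LX j) \<psi>)))"

fun lprod :: "nat \<Rightarrow> (nat \<Rightarrow> qmat) \<Rightarrow> bits \<Rightarrow> nat \<Rightarrow> qvec \<Rightarrow> qvec" where
  "lprod n L u 0 \<psi> = \<psi>"
| "lprod n L u (Suc j) \<psi> = (if u j then app n (L j) (lprod n L u j \<psi>) else lprod n L u j \<psi>)"

text \<open>The logical version of the k-qubit Pauli X^u Z^v.\<close>
definition logical_pauli_app ::
  "nat \<Rightarrow> nat \<Rightarrow> (nat \<Rightarrow> qmat) \<Rightarrow> (nat \<Rightarrow> qmat) \<Rightarrow> bits \<Rightarrow> bits \<Rightarrow> qvec \<Rightarrow> qvec" where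
  "logical_pauli_app n k LX LZ u v \<psi> = lprod n LX u k (lprod n LZ v k \<psi>)"

text \<open>Coefficient of X^u Z^v in the Pauli expansion of the k-qubit operator W.\<close>
definition pauli_coeff :: "nat \<Rightarrow> qmat \<Rightarrow> bits \<Rightarrow> bits \<Rightarrow> complex" where
  "pauli_coeff k W u v =
     (\<Sum>x\<in>bvecs k. \<Sum>y\<in>bvecs k. cnj (mat_mult k (gpow k gX u) (gpow k gZ v) x y) * W x y)
     / 2 ^ k"

definition has_logical_action ::
  "nat \<Rightarrow> bits set \<Rightarrow> bits set \<Rightarrow> nat \<Rightarrow> (nat \<Rightarrow> qmat) \<Rightarrow> (nat \<Rightarrow> qmat) \<Rightarrow> qmat \<Rightarrow> qmat \<Rightarrow> bool" where
  "has_logical_action n A B k LX LZ G W \<longleftrightarrow> logical_op n A B G \<and>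
     (\<forall>\<psi>\<in>codespace n A B. app n G \<psi> =
        (\<lambda>x. \<Sum>u\<in>bvecs k. \<Sum>v\<in>bvecs k. pauli_coeff k W u v * logical_pauli_app n k LX LZ u v \<psi> x))"

definition addr_set :: "nat \<Rightarrow> nat \<Rightarrow> nat list set \<Rightarrow> bool" where
  "addr_set k p I \<longleftrightarrow> finite I \<and> I \<noteq> {} \<and>
     (\<forall>t\<in>I. length t = p \<and> distinct t \<and> set t \<subseteq> {0..<k}) \<and>
     (\<forall>t\<in>I. \<forall>s\<in>I. t \<noteq> s \<longrightarrow> set t \<inter> set s = {}) \<and>
     (\<Union>t\<in>I. set t) \<noteq> {0..<k}"

definition addr_target :: "nat \<Rightarrow> nat \<Rightarrow> qmat \<Rightarrow> nat list set \<Rightarrow> qmat" where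
  "addr_target k p U I = (\<lambda>x y.
     (\<Prod>t\<in>I. U (\<lambda>j. j < p \<and> x (t ! j)) (\<lambda>j. j < p \<and> y (t ! j))) *
     (\<Prod>i\<in>{0..<k} - (\<Union>t\<in>I. set t). if x i = y i then 1 else 0))"

datatype vlabel = VI | VP | VHP | VPH | VPHP | VH

fun vgate :: "vlabel \<Rightarrow> gate" where
  "vgate VI = gI"
| "vgate VP = gP"
| "vgate VHP = gmul gH gP"
| "vgate VPH = gmul gP gH"
| "vgate VPHP = gmul gP (gmul gH gP)"
| "vgate VH = gH"

end

theory Submission
  imports Defs
begin


definition mg :: "bool \<Rightarrow> bool \<Rightarrow> gate" where
  "mg a b u v = (if v = (u \<noteq> a) then (if b \<and> v then -1 else 1) else 0)"

definition gPd :: gate where "gPd a b = (if a = b then (if a then -\<i> else 1) else 0)"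
definition gH0 :: gate where "gH0 a b = (if a \<and> b then -1 else 1)"

fun vg0 :: "vlabel \<Rightarrow> gate" where
  "vg0 VI = gI"
| "vg0 VP = gP"
| "vg0 VHP = gmul gH0 gP"
| "vg0 VPH = gmul gP gH0"
| "vg0 VPHP = gmul gP (gmul gH0 gP)"
| "vg0 VH = gH0"

fun vi0 :: "vlabel \<Rightarrow> gate" where
  "vi0 VI = gI"
| "vi0 VP = gPd"
| "vi0 VHP = gmul gPd gH0"
| "vi0 VPH = gmul gH0 gPd"
| "vi0 VPHP = gmul gPd (gmul gH0 gPd)"
| "vi0 VH = gH0"

fun imX :: "vlabel \<Rightarrow> bool \<times> bool" where
  "imX VI = (True, False)" | "imX VP = (True, True)" | "imX VHP = (False, True)"
| "imX VPH = (True, True)" | "imX VPHP = (True, False)" | "imX VH = (False, True)"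
fun imZ :: "vlabel \<Rightarrow> bool \<times> bool" where
  "imZ VI = (False, True)" | "imZ VP = (False, True)" | "imZ VHP = (True, True)"
| "imZ VPH = (True, False)" | "imZ VPHP = (True, True)" | "imZ VH = (True, False)"

definition ta :: "vlabel \<Rightarrow> bool \<Rightarrow> bool \<Rightarrow> bool" where
  "ta v a b = ((a \<and> fst (imX v)) \<noteq> (b \<and> fst (imZ v)))"
definition tb :: "vlabel \<Rightarrow> bool \<Rightarrow> bool \<Rightarrow> bool" where
  "tb v a b = ((a \<and> snd (imX v)) \<noteq> (b \<and> snd (imZ v)))"

lemma sum_bool: "(\<Sum>b\<in>(UNIV::bool set). f b) = f False + f True"
  by (simp add: UNIV_bool add.commute)

lemma r0_form:
  fixes a b :: bool and v :: vlabel
  assumes "q \<in> {gI, gX, gY, gZ}"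
  defines "r \<equiv> gmul (gmul q (vi0 v)) (gmul (mg a b) (gmul (vg0 v) q))"
  shows "r = (\<lambda>u w. (r False (ta v a b) * (if ta v a b \<and> tb v a b then -1 else 1)) * mg (ta v a b) (tb v a b) u w)"
  using assms
  apply (cases v; cases a; cases b)
  apply (auto simp: fun_eq_iff gmul_def sum_bool gI_def gX_def gY_def gZ_def gP_def gPd_def gH0_def mg_def ta_def tb_def)
  done

definition dd :: "vlabel \<Rightarrow> complex" where
  "dd v = (if v \<in> {VHP, VPH, VPHP, VH} then 2 else 1)"

definition hs :: complex where "hs = 1 / complex_of_real (sqrt 2)"

definition sc :: "vlabel \<Rightarrow> complex" where
  "sc v = (if v \<in> {VHP, VPH, VPHP, VH} then hs else 1)"

lemma w0inv:
  assumes "q \<in> {gI, gX, gY, gZ}"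
  shows "gmul (gmul (vg0 v) q) (gmul q (vi0 v)) = (\<lambda>a b. dd v * gI a b)"
  using assms
  apply (cases v)
  apply (auto simp: fun_eq_iff gmul_def sum_bool gI_def gX_def gY_def gZ_def gP_def gPd_def gH0_def dd_def)
  done

lemma w0inv2:
  assumes "q \<in> {gI, gX, gY, gZ}"
  shows "gmul (gmul q (vi0 v)) (gmul (vg0 v) q) = (\<lambda>a b. dd v * gI a b)"
  using assms
  apply (cases v)
  apply (auto simp: fun_eq_iff gmul_def sum_bool gI_def gX_def gY_def gZ_def gP_def gPd_def gH0_def dd_def)
  done

lemma gmul_scal_l: "gmul (\<lambda>a b. s * A a b) B = (\<lambda>a c. s * gmul A B a c)"
  by (simp add: gmul_def fun_eq_iff sum_distrib_left mult.assoc)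

lemma gmul_scal_r: "gmul A (\<lambda>a b. s * B a b) = (\<lambda>a c. s * gmul A B a c)"
  by (simp add: gmul_def fun_eq_iff sum_distrib_left mult.left_commute)

lemma gH_sc: "gH = (\<lambda>a b. hs * gH0 a b)"
  by (simp add: fun_eq_iff gH_def gH0_def hs_def)

lemma vgate_sc: "vgate v = (\<lambda>a b. sc v * vg0 v a b)"
  by (cases v) (simp_all add: sc_def gH_sc gmul_scal_l gmul_scal_r fun_eq_iff)

lemma gmul_assoc: "gmul (gmul A B) C = gmul A (gmul B C)"
  by (simp add: gmul_def sum_bool fun_eq_iff algebra_simps)

lemma gmul_gI: "gmul gI A = A"
  by (simp add: gmul_def sum_bool fun_eq_iff gI_def)

lemma dd_nz: "dd v \<noteq> 0" by (simp add: dd_def)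
lemma sc_nz: "sc v \<noteq> 0" by (simp add: sc_def hs_def)

lemma conj1:
  assumes q: "q \<in> {gI, gX, gY, gZ}"
  shows "\<exists>lam. gmul (mg a b) (gmul (vgate v) q)
     = gmul (gmul (vgate v) q) (\<lambda>u w. lam * mg (ta v a b) (tb v a b) u w)"
proof -
  define w where "w = gmul (vg0 v) q"
  define wi where "wi = gmul q (vi0 v)"
  define r where "r = gmul wi (gmul (mg a b) w)"
  define lam where "lam = r False (ta v a b) * (if ta v a b \<and> tb v a b then -1 else 1)"
  have r: "r = (\<lambda>u w. lam * mg (ta v a b) (tb v a b) u w)"
    unfolding lam_def r_def wi_def w_def by (rule r0_form[OF q])
  have "gmul w r = gmul (gmul w wi) (gmul (mg a b) w)"
    unfolding r_def by (simp add: gmul_assoc)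
  also have "\<dots> = (\<lambda>x y. dd v * gmul (mg a b) w x y)"
    unfolding w_def wi_def w0inv[OF q] gmul_scal_l gmul_gI ..
  finally have e: "gmul (mg a b) w = gmul w (\<lambda>u w. (lam / dd v) * mg (ta v a b) (tb v a b) u w)"
    using dd_nz[of v] unfolding r gmul_scal_r by (auto simp: fun_eq_iff field_simps)
  have ww: "gmul (vgate v) q = (\<lambda>x y. sc v * w x y)"
    unfolding w_def vgate_sc gmul_scal_l ..
  show ?thesis unfolding ww gmul_scal_l gmul_scal_r e by blast
qed

lemma winv_left:
  assumes q: "q \<in> {gI, gX, gY, gZ}"
  shows "\<exists>wi. gmul wi (gmul (vgate v) q) = gI"
proof
  have "gmul (\<lambda>x y. (1 / (sc v * dd v)) * gmul q (vi0 v) x y) (gmul (vgate v) q)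
      = (\<lambda>x y. (1 / (sc v * dd v)) * (sc v * (dd v * gI x y)))"
    unfolding vgate_sc gmul_scal_l gmul_scal_r w0inv2[OF q] ..
  then show "gmul (\<lambda>x y. (1 / (sc v * dd v)) * gmul q (vi0 v) x y) (gmul (vgate v) q) = gI"
    using sc_nz[of v] dd_nz[of v] by (simp add: fun_eq_iff)
qed




lemma bvecs_Suc: "bvecs (Suc n) = (\<lambda>(y, b). y(n := b)) ` (bvecs n \<times> UNIV)"
proof (rule set_eqI, rule iffI)
  fix x assume x: "x \<in> bvecs (Suc n)"
  have "x(n := False) \<in> bvecs n" using x by (auto simp: bvecs_def)
  moreover have "x = (x(n := False))(n := x n)" by simp
  ultimately show "x \<in> (\<lambda>(y, b). y(n := b)) ` (bvecs n \<times> UNIV)"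
    by (intro image_eqI[where x="(x(n := False), x n)"]) auto
next
  fix x assume "x \<in> (\<lambda>(y, b). y(n := b)) ` (bvecs n \<times> UNIV)"
  then show "x \<in> bvecs (Suc n)" by (auto simp: bvecs_def)
qed

lemma inj_ext: "inj_on (\<lambda>(y, b). y(n := b)) (bvecs n \<times> UNIV)"
proof (rule inj_onI, clarify)
  fix y b y' b' assume y: "y \<in> bvecs n" and y': "y' \<in> bvecs n" and e: "y(n := b) = y'(n := b')"
  have "b = b'" using fun_cong[OF e, of n] by simp
  moreover have "y = y'"
  proof
    fix i show "y i = y' i"
      using fun_cong[OF e, of i] y y' by (cases "i = n") (auto simp: bvecs_def)
  qed
  ultimately show "y = y' \<and> b = b'" by simp
qed

lemma finite_bvecs: "finite (bvecs n)"
proof (induction n)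
  case 0
  have "bvecs 0 = {\<lambda>_. False}" by (auto simp: bvecs_def)
  then show ?case by simp
next
  case (Suc n) then show ?case by (simp add: bvecs_Suc)
qed

lemma sum_bvecs_Suc:
  "(\<Sum>y\<in>bvecs (Suc n). f y) = (\<Sum>y\<in>bvecs n. \<Sum>b\<in>UNIV. f (y(n := b)))"
proof -
  have "(\<Sum>y\<in>bvecs (Suc n). f y) = (\<Sum>p\<in>bvecs n \<times> UNIV. f ((\<lambda>(y, b). y(n := b)) p))"
    unfolding bvecs_Suc by (rule sum.reindex[OF inj_ext, unfolded comp_def])
  then show ?thesis by (simp add: sum.cartesian_product split_def)
qed

lemma sum_prod_bvecs:
  fixes h :: "nat \<Rightarrow> bool \<Rightarrow> complex"
  shows   "(\<Sum>y\<in>bvecs n. \<Prod>i<n. h i (y i)) = (\<Prod>i<n. \<Sum>b\<in>UNIV. h i b)"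
proof (induction n)
  case 0
  have "bvecs 0 = {\<lambda>_. False}" by (auto simp: bvecs_def)
  then show ?case by simp
next
  case (Suc n)
  have "(\<Sum>y\<in>bvecs (Suc n). \<Prod>i<Suc n. h i (y i))
      = (\<Sum>y\<in>bvecs n. \<Sum>b\<in>UNIV. \<Prod>i<Suc n. h i ((y(n := b)) i))"
    by (rule sum_bvecs_Suc)
  also have "\<dots> = (\<Sum>y\<in>bvecs n. \<Sum>b\<in>UNIV. (\<Prod>i<n. h i (y i)) * h n b)"
  proof (intro sum.cong refl)
    fix y b
    have "(\<Prod>i<n. h i ((y(n := b)) i)) = (\<Prod>i<n. h i (y i))"
      by (intro prod.cong) auto
    then show "(\<Prod>i<Suc n. h i ((y(n := b)) i)) = (\<Prod>i<n. h i (y i)) * h n b"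
      by (simp add: lessThan_Suc mult.commute)
  qed
  also have "\<dots> = (\<Sum>y\<in>bvecs n. \<Prod>i<n. h i (y i)) * (\<Sum>b\<in>UNIV. h n b)"
    by (simp add: sum_product)
  also have "\<dots> = (\<Prod>i<Suc n. \<Sum>b\<in>UNIV. h i b)"
    using Suc by (simp add: lessThan_Suc)
  finally show ?case .
qed

lemma tensor_mult: "mat_mult n (tensor n F) (tensor n G) = tensor n (\<lambda>i. gmul (F i) (G i))"
proof (intro ext)
  fix x z
  have "mat_mult n (tensor n F) (tensor n G) x z
      = (\<Sum>y\<in>bvecs n. \<Prod>i<n. F i (x i) (y i) * G i (y i) (z i))"
    by (simp add: mat_mult_def tensor_def prod.distrib)
  also have "\<dots> = (\<Prod>i<n. \<Sum>b\<in>UNIV. F i (x i) b * G i b (z i))"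
    by (rule sum_prod_bvecs)
  finally show "mat_mult n (tensor n F) (tensor n G) x z = tensor n (\<lambda>i. gmul (F i) (G i)) x z"
    by (simp add: tensor_def gmul_def)
qed

lemma tensor_scal: "tensor n (\<lambda>i u v. c i * F i u v) = (\<lambda>x y. (\<Prod>i<n. c i) * tensor n F x y)"
  by (simp add: tensor_def prod.distrib fun_eq_iff)

lemma tensor_cong: "(\<And>i. i < n \<Longrightarrow> F i = G i) \<Longrightarrow> tensor n F = tensor n G"
  by (simp add: tensor_def fun_eq_iff)

lemma app_mult: "app n (mat_mult n M N) \<psi> = app n M (app n N \<psi>)"
proof (intro ext)
  fix x
  show "app n (mat_mult n M N) \<psi> x = app n M (app n N \<psi>) x"
  proof (cases "x \<in> bvecs n")
    case True
    have "app n M (app n N \<psi>) x = (\<Sum>y\<in>bvecs n. M x y * (\<Sum>z\<in>bvecs n. N y z * \<psi> z))"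
      using True by (simp add: app_def)
    also have "\<dots> = (\<Sum>y\<in>bvecs n. \<Sum>z\<in>bvecs n. M x y * N y z * \<psi> z)"
      by (simp add: sum_distrib_left mult.assoc)
    also have "\<dots> = (\<Sum>z\<in>bvecs n. \<Sum>y\<in>bvecs n. M x y * N y z * \<psi> z)"
      by (rule sum.swap)
    also have "\<dots> = app n (mat_mult n M N) \<psi> x"
      using True by (simp add: app_def mat_mult_def sum_distrib_right)
    finally show ?thesis by simp
  qed (simp add: app_def)
qed

lemma app_scal: "app n (\<lambda>x y. c * M x y) \<psi> = (\<lambda>x. c * app n M \<psi> x)"
  by (simp add: app_def fun_eq_iff sum_distrib_left mult.assoc)

lemma app_vscal: "app n M (\<lambda>x. c * \<psi> x) = (\<lambda>x. c * app n M \<psi> x)"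
  by (simp add: app_def fun_eq_iff sum_distrib_left mult.left_commute)

lemma app_vsum: "finite S \<Longrightarrow> app n M (\<lambda>x. \<Sum>u\<in>S. f u x) = (\<lambda>x. \<Sum>u\<in>S. app n M (f u) x)"
  by (simp add: app_def fun_eq_iff sum_distrib_left sum.swap[of _ S] if_distrib sum.If_cases)

lemma app_states: "app n M \<psi> \<in> states n"
  by (simp add: app_def states_def)

lemma tensor_gI: "x \<in> bvecs n \<Longrightarrow> y \<in> bvecs n \<Longrightarrow> tensor n (\<lambda>_. gI) x y = (if x = y then 1 else 0)"
proof (cases "x = y")
  case False
  assume x: "x \<in> bvecs n" and y: "y \<in> bvecs n"
  obtain i where "x i \<noteq> y i" using False by auto
  then have i: "i < n" "x i \<noteq> y i" using x y by (auto simp: bvecs_def not_less[symmetric])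
  then show ?thesis using False by (auto simp: tensor_def gI_def intro!: prod_zero)
qed (simp add: tensor_def gI_def)

lemma app_gI: "\<psi> \<in> states n \<Longrightarrow> app n (tensor n (\<lambda>_. gI)) \<psi> = \<psi>"
proof (rule ext)
  fix x assume s: "\<psi> \<in> states n"
  show "app n (tensor n (\<lambda>_. gI)) \<psi> x = \<psi> x"
  proof (cases "x \<in> bvecs n")
    case True
    have "(\<Sum>y\<in>bvecs n. tensor n (\<lambda>_. gI) x y * \<psi> y) = (\<Sum>y\<in>bvecs n. if x = y then \<psi> y else 0)"
      using True by (intro sum.cong) (auto simp: tensor_gI)
    also have "\<dots> = \<psi> x" using True by (simp add: finite_bvecs)
    finally show ?thesis using True by (simp add: app_def)
  qed (use s in \<open>simp add: app_def states_def\<close>)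
qed



definition z0 :: bits where "z0 = (\<lambda>_. False)"

definition monoT :: "nat \<Rightarrow> bits \<Rightarrow> bits \<Rightarrow> qmat" where
  "monoT n \<alpha> \<beta> = tensor n (\<lambda>i. mg (\<alpha> i) (\<beta> i))"

definition sgp :: "nat \<Rightarrow> bits \<Rightarrow> bits \<Rightarrow> complex" where
  "sgp n a b = (\<Prod>i<n. if a i \<and> b i then -1 else 1)"

lemma prod_sign_card:
  fixes n :: nat shows "(\<Prod>i<n. if P i then -1 else (1::complex)) = (if odd (card {i. i < n \<and> P i}) then -1 else 1)"
proof (induction n)
  case 0 then show ?case by simp
next
  case (Suc n)
  show ?case
  proof (cases "P n")
    case True
    have e: "{i. i < Suc n \<and> P i} = insert n {i. i < n \<and> P i}" using True by auto
    have "card {i. i < Suc n \<and> P i} = Suc (card {i. i < n \<and> P i})"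
      unfolding e by (subst card_insert_disjoint) auto
    then show ?thesis using Suc True by (simp add: lessThan_Suc)
  next
    case False
    have e: "{i. i < Suc n \<and> P i} = {i. i < n \<and> P i}" using False less_Suc_eq by auto
    then show ?thesis using Suc False by (simp add: lessThan_Suc)
  qed
qed

lemma sgp_dotp: "sgp n a b = (if dotp n a b then -1 else 1)"
  by (simp add: sgp_def dotp_def prod_sign_card)

lemma sgp_xor_right: "sgp n a (bxor b c) = sgp n a b * sgp n a c"
  by (simp add: sgp_def bxor_def prod.distrib[symmetric]) (intro prod.cong, auto)

lemma sgp_sym: "sgp n a b = sgp n b a"
  by (simp add: sgp_def conj_commute)

lemma dotp_xor_right: "dotp n a (bxor b c) = (dotp n a b \<noteq> dotp n a c)"
  using sgp_xor_right[of n a b c] by (simp add: sgp_dotp split: if_splits)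

lemma dotp_sym: "dotp n a b = dotp n b a"
  using sgp_sym[of n a b] by (simp add: sgp_dotp split: if_splits)

lemma dotp_xor_left: "dotp n (bxor b c) a = (dotp n b a \<noteq> dotp n c a)"
  using dotp_xor_right dotp_sym by metis

lemma dotp_z0: "\<not> dotp n z0 a" "\<not> dotp n a z0"
  by (simp_all add: dotp_def z0_def)

lemma sgp_sq: "sgp n a b * sgp n a b = 1"
  by (simp add: sgp_dotp)

lemma bxor_bvecs: "a \<in> bvecs n \<Longrightarrow> b \<in> bvecs n \<Longrightarrow> bxor a b \<in> bvecs n"
  by (simp add: bvecs_def bxor_def)

lemma z0_bvecs: "z0 \<in> bvecs n" by (simp add: bvecs_def z0_def)

lemma bxor_simps: "bxor a a = z0" "bxor a z0 = a" "bxor z0 a = a"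
  "bxor (bxor a b) c = bxor a (bxor b c)" "bxor a b = bxor b a"
  "bxor a (bxor a b) = b"
  by (auto simp: bxor_def z0_def fun_eq_iff)

lemma mg_mult: "gmul (mg a b) (mg c d) = (\<lambda>u v. (if b \<and> c then -1 else 1) * mg (a \<noteq> c) (b \<noteq> d) u v)"
  by (cases a; cases b; cases c; cases d) (auto simp: gmul_def sum_bool mg_def fun_eq_iff)

lemma monoT_mult:
  "mat_mult n (monoT n \<alpha> \<beta>) (monoT n \<gamma> \<delta>) = (\<lambda>x y. sgp n \<beta> \<gamma> * monoT n (bxor \<alpha> \<gamma>) (bxor \<beta> \<delta>) x y)"
  unfolding monoT_def tensor_mult mg_mult tensor_scal sgp_def bxor_def by simp

lemma gpow_X: "gpow n gX a = monoT n a z0"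
  unfolding gpow_def monoT_def
  by (rule tensor_cong) (auto simp: gX_def gI_def mg_def z0_def fun_eq_iff)

lemma gpow_Z: "gpow n gZ b = monoT n z0 b"
  unfolding gpow_def monoT_def
  by (rule tensor_cong) (auto simp: gZ_def gI_def mg_def z0_def fun_eq_iff)

lemma gpow_XZ: "mat_mult n (gpow n gX a) (gpow n gZ b) = monoT n a b"
proof -
  have "sgp n z0 z0 = 1" by (simp add: sgp_def z0_def)
  then show ?thesis unfolding gpow_X gpow_Z monoT_mult by (simp add: bxor_simps)
qed

lemma monoT_00: "monoT n z0 z0 = tensor n (\<lambda>_. gI)"
  unfolding monoT_def by (rule tensor_cong) (auto simp: gI_def mg_def z0_def fun_eq_iff)

lemma monoT_val:
  assumes x: "x \<in> bvecs n" and y: "y \<in> bvecs n" and a: "\<alpha> \<in> bvecs n"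
  shows "monoT n \<alpha> \<beta> x y = (if y = bxor x \<alpha> then sgp n \<beta> y else 0)"
proof (cases "y = bxor x \<alpha>")
  case True
  then show ?thesis by (simp add: monoT_def tensor_def mg_def sgp_def bxor_def)
next
  case False
  then obtain i where "y i \<noteq> bxor x \<alpha> i" by auto
  then have i: "i < n" "y i \<noteq> (x i \<noteq> \<alpha> i)" using x y a
    by (auto simp: bvecs_def bxor_def not_less[symmetric])
  then show ?thesis using False by (auto simp: monoT_def tensor_def mg_def intro!: prod_zero)
qed

lemma app_monoT:
  assumes a: "\<alpha> \<in> bvecs n"
  shows "app n (monoT n \<alpha> \<beta>) \<psi> x =
    (if x \<in> bvecs n then sgp n \<beta> (bxor x \<alpha>) * \<psi> (bxor x \<alpha>) else 0)"
proof (cases "x \<in> bvecs n")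
  case True
  have "(\<Sum>y\<in>bvecs n. monoT n \<alpha> \<beta> x y * \<psi> y)
      = (\<Sum>y\<in>bvecs n. if y = bxor x \<alpha> then sgp n \<beta> (bxor x \<alpha>) * \<psi> (bxor x \<alpha>) else 0)"
    using True a by (intro sum.cong) (auto simp: monoT_val)
  also have "\<dots> = sgp n \<beta> (bxor x \<alpha>) * \<psi> (bxor x \<alpha>)"
    using True a by (simp add: finite_bvecs bxor_bvecs)
  finally show ?thesis using True by (simp add: app_def)
qed (simp add: app_def)



definition Tx :: "nat \<Rightarrow> (nat \<Rightarrow> vlabel) \<Rightarrow> bits \<Rightarrow> bits \<Rightarrow> bits" where
  "Tx n V a b = (\<lambda>i. i < n \<and> ta (V i) (a i) (b i))"
definition Tz :: "nat \<Rightarrow> (nat \<Rightarrow> vlabel) \<Rightarrow> bits \<Rightarrow> bits \<Rightarrow> bits" where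
  "Tz n V a b = (\<lambda>i. i < n \<and> tb (V i) (a i) (b i))"

lemma Tx_bvecs: "Tx n V a b \<in> bvecs n" and Tz_bvecs: "Tz n V a b \<in> bvecs n"
  by (auto simp: Tx_def Tz_def bvecs_def)

lemma mat_mult_scal_right: "mat_mult n M (\<lambda>x y. c * N x y) = (\<lambda>x y. c * mat_mult n M N x y)"
  by (simp add: mat_mult_def fun_eq_iff sum_distrib_left mult.left_commute)

lemma G_conj:
  assumes Q: "\<forall>i<n. Q i \<in> {gI, gX, gY, gZ}"
    and G: "G = (\<lambda>x y. c * mat_mult n (tensor n (\<lambda>i. vgate (V i))) (tensor n Q) x y)"
  shows "\<exists>lam. \<forall>\<psi>. app n (monoT n \<alpha> \<beta>) (app n G \<psi>)
           = app n G (\<lambda>x. lam * app n (monoT n (Tx n V \<alpha> \<beta>) (Tz n V \<alpha> \<beta>)) \<psi> x)"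
proof -
  define w where "w i = gmul (vgate (V i)) (Q i)" for i
  have G2: "G = (\<lambda>x y. c * tensor n w x y)" unfolding G tensor_mult w_def ..
  define lf where "lf i = (SOME lam. gmul (mg (\<alpha> i) (\<beta> i)) (w i)
     = gmul (w i) (\<lambda>u v. lam * mg (ta (V i) (\<alpha> i) (\<beta> i)) (tb (V i) (\<alpha> i) (\<beta> i)) u v))" for i
  have lf: "gmul (mg (\<alpha> i) (\<beta> i)) (w i)
     = gmul (w i) (\<lambda>u v. lf i * mg (ta (V i) (\<alpha> i) (\<beta> i)) (tb (V i) (\<alpha> i) (\<beta> i)) u v)" if "i < n" for i
  proof -
    have "\<exists>lam. gmul (mg (\<alpha> i) (\<beta> i)) (w i)
     = gmul (w i) (\<lambda>u v. lam * mg (ta (V i) (\<alpha> i) (\<beta> i)) (tb (V i) (\<alpha> i) (\<beta> i)) u v)"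
      unfolding w_def using conj1[of "Q i" "\<alpha> i" "\<beta> i" "V i"] Q that by auto
    then show ?thesis unfolding lf_def by (rule someI_ex)
  qed
  have "mat_mult n (monoT n \<alpha> \<beta>) (tensor n w) = tensor n (\<lambda>i. gmul (mg (\<alpha> i) (\<beta> i)) (w i))"
    unfolding monoT_def tensor_mult ..
  also have "\<dots> = tensor n (\<lambda>i. gmul (w i) (\<lambda>u v. lf i * mg (ta (V i) (\<alpha> i) (\<beta> i)) (tb (V i) (\<alpha> i) (\<beta> i)) u v))"
    by (rule tensor_cong) (use lf in auto)
  also have "\<dots> = mat_mult n (tensor n w) (tensor n (\<lambda>i u v. lf i * mg (ta (V i) (\<alpha> i) (\<beta> i)) (tb (V i) (\<alpha> i) (\<beta> i)) u v))"
    unfolding tensor_mult ..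
  also have "tensor n (\<lambda>i u v. lf i * mg (ta (V i) (\<alpha> i) (\<beta> i)) (tb (V i) (\<alpha> i) (\<beta> i)) u v)
     = (\<lambda>x y. (\<Prod>i<n. lf i) * monoT n (Tx n V \<alpha> \<beta>) (Tz n V \<alpha> \<beta>) x y)"
  proof -
    have "tensor n (\<lambda>i. mg (ta (V i) (\<alpha> i) (\<beta> i)) (tb (V i) (\<alpha> i) (\<beta> i))) = monoT n (Tx n V \<alpha> \<beta>) (Tz n V \<alpha> \<beta>)"
      unfolding monoT_def by (rule tensor_cong) (simp add: Tx_def Tz_def)
    then show ?thesis by (simp add: tensor_scal)
  qed
  finally have e: "mat_mult n (monoT n \<alpha> \<beta>) (tensor n w)
     = mat_mult n (tensor n w) (\<lambda>x y. (\<Prod>i<n. lf i) * monoT n (Tx n V \<alpha> \<beta>) (Tz n V \<alpha> \<beta>) x y)" .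
  show ?thesis
  proof (intro exI allI)
    fix \<psi>
    have "app n (monoT n \<alpha> \<beta>) (app n G \<psi>) = app n (mat_mult n (monoT n \<alpha> \<beta>) G) \<psi>"
      by (simp add: app_mult)
    also have "\<dots> = (\<lambda>x. c * app n (mat_mult n (monoT n \<alpha> \<beta>) (tensor n w)) \<psi> x)"
      unfolding G2 mat_mult_scal_right app_scal ..
    also have "\<dots> = (\<lambda>x. c * app n (tensor n w) (app n (\<lambda>x y. (\<Prod>i<n. lf i) * monoT n (Tx n V \<alpha> \<beta>) (Tz n V \<alpha> \<beta>) x y) \<psi>) x)"
      unfolding e app_mult ..
    also have "\<dots> = app n G (\<lambda>x. (\<Prod>i<n. lf i) * app n (monoT n (Tx n V \<alpha> \<beta>) (Tz n V \<alpha> \<beta>)) \<psi> x)"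
      unfolding G2 app_scal ..
    finally show "app n (monoT n \<alpha> \<beta>) (app n G \<psi>) = app n G (\<lambda>x. (\<Prod>i<n. lf i) * app n (monoT n (Tx n V \<alpha> \<beta>) (Tz n V \<alpha> \<beta>)) \<psi> x)" .
  qed
qed

lemma G_inj:
  assumes Q: "\<forall>i<n. Q i \<in> {gI, gX, gY, gZ}"
    and G: "G = (\<lambda>x y. c * mat_mult n (tensor n (\<lambda>i. vgate (V i))) (tensor n Q) x y)"
    and c: "c \<noteq> 0"
    and s: "\<phi>1 \<in> states n" "\<phi>2 \<in> states n"
    and e: "app n G \<phi>1 = app n G \<phi>2"
  shows "\<phi>1 = \<phi>2"
proof -
  define w where "w i = gmul (vgate (V i)) (Q i)" for i
  define wi where "wi i = (SOME wi. gmul wi (w i) = gI)" for i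
  have G2: "G = (\<lambda>x y. c * tensor n w x y)" unfolding G tensor_mult w_def ..
  have wi: "gmul (wi i) (w i) = gI" if "i < n" for i
  proof -
    have "Q i \<in> {gI, gX, gY, gZ}" using Q that by blast
    then have "\<exists>wi. gmul wi (w i) = gI" unfolding w_def by (rule winv_left)
    then show ?thesis unfolding wi_def by (rule someI_ex)
  qed
  have inv: "tensor n (\<lambda>i. gmul (wi i) (w i)) = tensor n (\<lambda>_. gI)"
    by (rule tensor_cong) (use wi in auto)
  have L: "app n (tensor n wi) (app n (tensor n w) \<phi>) = \<phi>" if "\<phi> \<in> states n" for \<phi>
    unfolding app_mult[symmetric] tensor_mult inv using app_gI[OF that] .
  have "app n (tensor n w) \<phi>1 = app n (tensor n w) \<phi>2"
  proof
    fix x show "app n (tensor n w) \<phi>1 x = app n (tensor n w) \<phi>2 x"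
      using fun_cong[OF e, of x] c unfolding G2 app_scal by simp
  qed
  then show ?thesis using L[OF s(1)] L[OF s(2)] by metis
qed



inductive_set spn :: "bits set \<Rightarrow> bits set" for Gs where
  spn_z: "z0 \<in> spn Gs"
| spn_x: "g \<in> Gs \<Longrightarrow> x \<in> spn Gs \<Longrightarrow> bxor g x \<in> spn Gs"

lemma spn_mono: "x \<in> spn G \<Longrightarrow> x \<in> spn (insert g G)"
  by (induction rule: spn.induct) (auto intro: spn.intros)

lemma spn_closed: "x \<in> spn G \<Longrightarrow> y \<in> spn G \<Longrightarrow> bxor x y \<in> spn G"
  by (induction rule: spn.induct) (simp add: bxor_simps(3), metis bxor_simps(4) spn.spn_x)

lemma spn_gen: "g \<in> G \<Longrightarrow> g \<in> spn G"
  using spn_x[OF _ spn_z, of g G] by (simp add: bxor_simps)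

lemma perp_list:
  "set gs \<subseteq> bvecs n \<Longrightarrow> v \<in> bvecs n \<Longrightarrow> v \<notin> spn (set gs) \<Longrightarrow>
   \<exists>w\<in>bvecs n. (\<forall>g\<in>set gs. \<not> dotp n w g) \<and> dotp n w v"
proof (induction gs arbitrary: v)
  case Nil
  then have "v \<noteq> z0" using spn_z by auto
  then obtain i where vi: "v i" by (auto simp: z0_def)
  then have i: "i < n" using Nil by (auto simp: bvecs_def not_less[symmetric])
  have "{j. j < n \<and> j = i \<and> v j} = {i}" using i vi by auto
  then have "dotp n (\<lambda>j. j = i) v" by (simp add: dotp_def)
  moreover have "(\<lambda>j. j = i) \<in> bvecs n" using i by (auto simp: bvecs_def)
  ultimately show ?case by auto
next
  case (Cons g gs)
  have g: "g \<in> bvecs n" and gs: "set gs \<subseteq> bvecs n" using Cons by auto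
  have n1: "v \<notin> spn (set gs)" using Cons(4) spn_mono by auto
  have n2: "bxor v g \<notin> spn (set gs)"
  proof
    assume "bxor v g \<in> spn (set gs)"
    then have "bxor (bxor v g) g \<in> spn (set (g # gs))"
      using spn_mono spn_closed spn_gen by (metis list.set_intros(1) list.simps(15))
    then show False using Cons(4) by (simp add: bxor_simps)
  qed
  obtain w1 where w1: "w1 \<in> bvecs n" "\<forall>h\<in>set gs. \<not> dotp n w1 h" "dotp n w1 v"
    using Cons.IH[OF gs Cons(3) n1] by blast
  obtain w2 where w2: "w2 \<in> bvecs n" "\<forall>h\<in>set gs. \<not> dotp n w2 h" "dotp n w2 (bxor v g)"
    using Cons.IH[OF gs bxor_bvecs[OF Cons(3) g] n2] by blast
  show ?case
  proof (cases "dotp n w1 g")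
    case False then show ?thesis using w1 by auto
  next
    case True
    show ?thesis
    proof (cases "dotp n w2 g")
      case False
      then have "dotp n w2 v" using w2(3) by (simp add: dotp_xor_right)
      then show ?thesis using w2 False by auto
    next
      case T2: True
      then have "\<not> dotp n w2 v" using w2(3) by (simp add: dotp_xor_right)
      then show ?thesis using w1 w2 True T2
        by (intro bexI[of _ "bxor w1 w2"]) (auto simp: dotp_xor_left bxor_bvecs)
    qed
  qed
qed

lemma perp_sub:
  assumes B: "f2_subspace n B" and b: "\<beta> \<in> bvecs n" and nb: "\<beta> \<notin> B"
  shows "\<exists>w\<in>bvecs n. (\<forall>b\<in>B. \<not> dotp n w b) \<and> dotp n w \<beta>"
proof -
  have fin: "finite B" using B finite_bvecs by (auto simp: f2_subspace_def intro: finite_subset)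
  obtain gs where gs: "set gs = B" using finite_list[OF fin] by blast
  have "x \<in> B" if "x \<in> spn B" for x
    using that by (induction rule: spn.induct) (use B in \<open>auto simp: f2_subspace_def z0_def\<close>)
  then have "\<beta> \<notin> spn (set gs)" using nb gs by auto
  moreover have "set gs \<subseteq> bvecs n" using gs B by (simp add: f2_subspace_def)
  ultimately show ?thesis using perp_list[OF _ b] gs by auto
qed

definition cs :: "nat \<Rightarrow> bits set \<Rightarrow> bits \<Rightarrow> qvec" where
  "cs n A x0 = (\<lambda>y. if y \<in> bvecs n \<and> bxor y x0 \<in> A then 1 else 0)"

lemma f2_facts:
  assumes "f2_subspace n A"
  shows "z0 \<in> A" "a \<in> A \<Longrightarrow> b \<in> A \<Longrightarrow> bxor a b \<in> A" "a \<in> A \<Longrightarrow> a \<in> bvecs n"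
  using assms by (auto simp: f2_subspace_def z0_def)

lemma cs_code:
  assumes css: "css_code n A B" and x0: "x0 \<in> bvecs n" and perp: "\<forall>b\<in>B. \<not> dotp n b x0"
  shows "cs n A x0 \<in> codespace n A B"
proof -
  have A: "f2_subspace n A" and B: "f2_subspace n B" and orth: "\<forall>a\<in>A. \<forall>b\<in>B. \<not> dotp n a b"
    using css by (auto simp: css_code_def)
  have st: "cs n A x0 \<in> states n" by (simp add: cs_def states_def)
  have X: "app n (gpow n gX a) (cs n A x0) = cs n A x0" if a: "a \<in> A" for a
  proof
    fix x
    have ab: "a \<in> bvecs n" using f2_facts(3)[OF A a] .
    have s1: "sgp n z0 y = 1" for y by (simp add: sgp_def z0_def)
    have "bxor (bxor x a) x0 \<in> A \<longleftrightarrow> bxor x x0 \<in> A"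
    proof
      assume "bxor (bxor x a) x0 \<in> A"
      then have "bxor a (bxor (bxor x a) x0) \<in> A" using f2_facts(2)[OF A a] by blast
      then show "bxor x x0 \<in> A" by (metis bxor_simps(4,5,6))
    next
      assume "bxor x x0 \<in> A"
      then have "bxor a (bxor x x0) \<in> A" using f2_facts(2)[OF A a] by blast
      then show "bxor (bxor x a) x0 \<in> A" by (metis bxor_simps(4,5))
    qed
    then show "app n (gpow n gX a) (cs n A x0) x = cs n A x0 x"
      unfolding gpow_X app_monoT[OF ab] using ab by (auto simp: s1 cs_def bxor_bvecs)
  qed
  have Z: "app n (gpow n gZ b) (cs n A x0) = cs n A x0" if b: "b \<in> B" for b
  proof
    fix x
    have "sgp n b x = 1" if "x \<in> bvecs n" "bxor x x0 \<in> A"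
    proof -
      have "\<not> dotp n (bxor x x0) b" using orth that(2) b by blast
      have "dotp n b x = (dotp n b (bxor x x0) \<noteq> dotp n b x0)"
        by (metis bxor_simps(1,2,4) dotp_xor_right)
      then have "\<not> dotp n x b" using perp b \<open>\<not> dotp n (bxor x x0) b\<close> by (simp add: dotp_sym)
      then show ?thesis by (simp add: sgp_dotp dotp_sym)
    qed
    then show "app n (gpow n gZ b) (cs n A x0) x = cs n A x0 x"
      unfolding gpow_Z app_monoT[OF z0_bvecs] by (auto simp: cs_def bxor_simps)
  qed
  show ?thesis using st X Z by (simp add: codespace_def)
qed

lemma cs_val: "f2_subspace n A \<Longrightarrow> y \<in> bvecs n \<Longrightarrow> bxor y x0 \<in> A \<Longrightarrow> cs n A x0 y = 1"
  by (simp add: cs_def)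

lemma fixing:
  assumes css: "css_code n A B" and a: "\<alpha> \<in> bvecs n" and b: "\<beta> \<in> bvecs n"
    and fx: "\<forall>\<psi>\<in>codespace n A B. app n (\<lambda>x y. s * monoT n \<alpha> \<beta> x y) \<psi> = \<psi>"
  shows "\<alpha> \<in> A \<and> \<beta> \<in> B"
proof -
  have A: "f2_subspace n A" and B: "f2_subspace n B"
    using css by (auto simp: css_code_def)
  have eq: "s * (sgp n \<beta> (bxor x \<alpha>) * \<psi> (bxor x \<alpha>)) = \<psi> x"
    if "\<psi> \<in> codespace n A B" "x \<in> bvecs n" for \<psi> x
    using fun_cong[OF fx[rule_format, OF that(1)], of x] that(2)
    unfolding app_scal app_monoT[OF a] by simp
  define \<psi>0 where "\<psi>0 = cs n A z0"
  have c0: "\<psi>0 \<in> codespace n A B" unfolding \<psi>0_def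
    by (rule cs_code[OF css z0_bvecs]) (simp add: dotp_z0)
  have e0: "s * (sgp n \<beta> \<alpha> * \<psi>0 \<alpha>) = 1"
    using eq[OF c0 z0_bvecs] f2_facts(1)[OF A] by (simp add: bxor_simps \<psi>0_def cs_def z0_bvecs)
  then have "\<psi>0 \<alpha> \<noteq> 0" by auto
  then have aA: "\<alpha> \<in> A" by (simp add: \<psi>0_def cs_def bxor_simps split: if_splits)
  then have e0': "s * sgp n \<beta> \<alpha> = 1" using e0 a by (simp add: \<psi>0_def cs_def bxor_simps)
  have "\<beta> \<in> B"
  proof (rule ccontr)
    assume "\<beta> \<notin> B"
    then obtain w where w: "w \<in> bvecs n" "\<forall>b\<in>B. \<not> dotp n w b" "dotp n w \<beta>"
      using perp_sub[OF B b] by blast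
    have cw: "cs n A w \<in> codespace n A B"
      by (rule cs_code[OF css w(1)]) (use w(2) dotp_sym in metis)
    have "s * (sgp n \<beta> (bxor w \<alpha>) * cs n A w (bxor w \<alpha>)) = cs n A w w"
      using eq[OF cw w(1)] .
    moreover have "cs n A w (bxor w \<alpha>) = 1" using aA a w(1)
      by (simp add: cs_def bxor_bvecs) (metis bxor_simps(4,5,6))
    moreover have "cs n A w w = 1" using w(1) f2_facts(1)[OF A] by (simp add: cs_def bxor_simps)
    ultimately have "s * (sgp n \<beta> w * sgp n \<beta> \<alpha>) = 1"
      by (simp add: sgp_xor_right bxor_simps(5) ac_simps)
    then have "sgp n \<beta> w = 1" using e0' by (metis mult.left_commute mult.right_neutral)
    then show False using w(3) by (simp add: sgp_dotp dotp_sym)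
  qed
  then show ?thesis using aA by simp
qed

lemma eqfix:
  assumes css: "css_code n A B" and s: "s \<noteq> 0"
    and bv: "u \<in> bvecs n" "v \<in> bvecs n" "\<alpha> \<in> bvecs n" "\<beta> \<in> bvecs n"
    and eq: "\<forall>\<psi>\<in>codespace n A B. app n (\<lambda>x y. s * monoT n u v x y) \<psi> = app n (\<lambda>x y. t * monoT n \<alpha> \<beta> x y) \<psi>"
  shows "bxor u \<alpha> \<in> A \<and> bxor v \<beta> \<in> B"
proof -
  have sg: "sgp n v u \<noteq> 0" by (simp add: sgp_dotp)
  have "\<forall>\<psi>\<in>codespace n A B. app n (\<lambda>x y. (t * sgp n v \<alpha> / (s * sgp n v u)) * monoT n (bxor u \<alpha>) (bxor v \<beta>) x y) \<psi> = \<psi>"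
  proof
    fix \<psi> assume c: "\<psi> \<in> codespace n A B"
    then have st: "\<psi> \<in> states n" by (simp add: codespace_def)
    have "app n (monoT n u v) (app n (\<lambda>x y. s * monoT n u v x y) \<psi>)
        = app n (monoT n u v) (app n (\<lambda>x y. t * monoT n \<alpha> \<beta> x y) \<psi>)"
      using eq c by simp
    then have "(\<lambda>x. s * (sgp n v u * app n (monoT n z0 z0) \<psi> x))
       = (\<lambda>x. t * (sgp n v \<alpha> * app n (monoT n (bxor u \<alpha>) (bxor v \<beta>)) \<psi> x))"
      unfolding app_scal app_vscal app_mult[symmetric] monoT_mult by (simp add: bxor_simps)
    then have "(\<lambda>x. s * (sgp n v u * \<psi> x))
       = (\<lambda>x. t * (sgp n v \<alpha> * app n (monoT n (bxor u \<alpha>) (bxor v \<beta>)) \<psi> x))"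
      unfolding monoT_00 app_gI[OF st] .
    then show "app n (\<lambda>x y. (t * sgp n v \<alpha> / (s * sgp n v u)) * monoT n (bxor u \<alpha>) (bxor v \<beta>) x y) \<psi> = \<psi>"
      unfolding app_scal using s sg by (auto simp: fun_eq_iff field_simps)
  qed
  then show ?thesis using fixing[OF css bxor_bvecs[OF bv(1,3)] bxor_bvecs[OF bv(2,4)]] by blast
qed



definition flip :: "nat \<Rightarrow> bits \<Rightarrow> bits" where "flip j x = x(j := \<not> x j)"

lemma flip_bvecs: "j < k \<Longrightarrow> x \<in> bvecs k \<Longrightarrow> flip j x \<in> bvecs k"
  by (auto simp: flip_def bvecs_def)

lemma flip_flip: "flip j (flip j x) = x" by (simp add: flip_def fun_eq_iff)

lemma sum_flip:
  assumes "j < k"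
  shows "(\<Sum>x\<in>bvecs k. g (flip j x)) = (\<Sum>x\<in>bvecs k. g x)"
  by (rule sum.reindex_bij_witness[of _ "flip j" "flip j"]) (auto simp: flip_flip flip_bvecs[OF assms])

lemma addr_W0:
  assumes I: "addr_set k p I" and j: "j < k" "j \<notin> (\<Union>t\<in>I. set t)" and xy: "x j \<noteq> y j"
  shows "addr_target k p U I x y = 0"
proof -
  have "(\<Prod>i\<in>{0..<k} - (\<Union>t\<in>I. set t). if x i = y i then 1 else 0) = (0::complex)"
    using j xy by (intro prod_zero) auto
  then show ?thesis by (simp add: addr_target_def)
qed

lemma addr_W1:
  assumes I: "addr_set k p I" and j: "j < k" "j \<notin> (\<Union>t\<in>I. set t)"
  shows "addr_target k p U I (flip j x) (flip j y) = addr_target k p U I x y"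
proof -
  have e1: "(\<lambda>jj. jj < p \<and> flip j x (t ! jj)) = (\<lambda>jj. jj < p \<and> x (t ! jj))" if "t \<in> I" for t x
  proof
    fix jj
    have "jj < p \<Longrightarrow> t ! jj \<noteq> j" using I that j(2) by (auto simp: addr_set_def)
    then show "(jj < p \<and> flip j x (t ! jj)) = (jj < p \<and> x (t ! jj))" by (auto simp: flip_def)
  qed
  have e2: "(if flip j x i = flip j y i then 1 else 0) = (if x i = y i then 1 else (0::complex))" for i
    by (auto simp: flip_def)
  show ?thesis unfolding addr_target_def using e1 e2
    by (simp cong: prod.cong)
qed

lemma mono_M0:
  assumes j: "j < k" and u: "u j" and xy: "x j = y j"
  shows "monoT k u v x y = 0"
  unfolding monoT_def tensor_def using j u xy by (intro prod_zero) (auto simp: mg_def intro!: bexI[of _ j])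

lemma mono_M1:
  assumes j: "j < k" and u: "\<not> u j" and v: "v j"
  shows "monoT k u v (flip j x) (flip j y) = - monoT k u v x y"
proof -
  have r: "(\<Prod>i\<in>{..<k} - {j}. mg (u i) (v i) (flip j x i) (flip j y i)) = (\<Prod>i\<in>{..<k} - {j}. mg (u i) (v i) (x i) (y i))"
    by (intro prod.cong) (auto simp: flip_def)
  have jj: "mg (u j) (v j) (flip j x j) (flip j y j) = - mg (u j) (v j) (x j) (y j)"
    using u v by (auto simp: flip_def mg_def)
  show ?thesis unfolding monoT_def tensor_def
    using j by (simp add: prod.remove[of "{..<k}" j] r jj)
qed

lemma pc_zero:
  assumes I: "addr_set k p I" and j: "j < k" "j \<notin> (\<Union>t\<in>I. set t)" and uv: "u j \<or> v j"
  shows "pauli_coeff k (addr_target k p U I) u v = 0"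
proof -
  let ?W = "addr_target k p U I"
  define f where "f x y = cnj (monoT k u v x y) * ?W x y" for x y
  have "(\<Sum>x\<in>bvecs k. \<Sum>y\<in>bvecs k. f x y) = 0"
  proof (cases "u j")
    case True
    have "f x y = 0" for x y
    proof (cases "x j = y j")
      case True then show ?thesis using mono_M0[where j=j and k=k and u=u and v=v and x=x and y=y] j(1) \<open>u j\<close> by (simp add: f_def)
    next
      case False then show ?thesis using addr_W0[where x=x and y=y and U=U, OF I j False] by (simp add: f_def)
    qed
    then show ?thesis by simp
  next
    case False
    then have vj: "v j" using uv by simp
    have ff: "f (flip j x) (flip j y) = - f x y" for x y
      unfolding f_def addr_W1[where x=x and y=y and U=U, OF I j] mono_M1[where u=u and v=v and x=x and y=y and j=j, OF j(1) False vj] by simp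
    have "(\<Sum>x\<in>bvecs k. \<Sum>y\<in>bvecs k. f (flip j x) (flip j y)) = (\<Sum>x\<in>bvecs k. \<Sum>y\<in>bvecs k. f (flip j x) y)"
      by (rule sum.cong[OF refl]) (rule sum_flip[OF j(1)])
    also have "\<dots> = (\<Sum>x\<in>bvecs k. \<Sum>y\<in>bvecs k. f x y)"
      by (rule sum_flip[OF j(1), of "\<lambda>x. \<Sum>y\<in>bvecs k. f x y"])
    finally have "(\<Sum>x\<in>bvecs k. \<Sum>y\<in>bvecs k. f x y) = (\<Sum>x\<in>bvecs k. \<Sum>y\<in>bvecs k. f (flip j x) (flip j y))" ..
    also have "\<dots> = - (\<Sum>x\<in>bvecs k. \<Sum>y\<in>bvecs k. f x y)"
      by (simp add: ff sum_negf)
    finally show ?thesis by simp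
  qed
  then show ?thesis unfolding pauli_coeff_def gpow_XZ f_def by simp
qed

lemma lprod_pres:
  assumes L: "\<forall>l<k. \<forall>\<phi>\<in>C. app n (L l) \<phi> \<in> C" and c: "\<psi> \<in> C"
  shows "m \<le> k \<Longrightarrow> lprod n L u m \<psi> \<in> C"
  by (induction m) (use L c in auto)

lemma lprod_comm:
  assumes L: "\<forall>l<k. \<forall>\<phi>\<in>C. app n (L l) \<phi> \<in> C" and c: "\<psi> \<in> C"
    and cm: "\<forall>l<k. u l \<longrightarrow> (\<forall>\<phi>\<in>C. app n (L l) (app n M \<phi>) = app n M (app n (L l) \<phi>))"
  shows "m \<le> k \<Longrightarrow> lprod n L u m (app n M \<psi>) = app n M (lprod n L u m \<psi>)"
proof (induction m)
  case 0 then show ?case by simp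
next
  case (Suc m)
  have "lprod n L u m \<psi> \<in> C" using lprod_pres[OF L c] Suc by simp
  then show ?case using Suc cm by auto
qed

lemma app_vsum2:
  assumes "finite S" "finite S'"
  shows "app n M (\<lambda>x. \<Sum>u\<in>S. \<Sum>v\<in>S'. c u v * f u v x) = (\<lambda>x. \<Sum>u\<in>S. \<Sum>v\<in>S'. c u v * app n M (f u v) x)"
  using assms by (simp add: app_vsum app_vscal)



definition rst :: "bits \<Rightarrow> nat set \<Rightarrow> bits" where "rst a h = (\<lambda>i. a i \<and> i \<in> h)"

lemma split_lemma:
  assumes A: "f2_subspace n A" and r: "\<forall>a\<in>A. rst a h \<in> A"
  shows "splits_on n A h"
proof -
  define A1 where "A1 = {a\<in>A. \<forall>i. a i \<longrightarrow> i \<in> h}"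
  define A2 where "A2 = {a\<in>A. \<forall>i. a i \<longrightarrow> i \<notin> h}"
  have f1: "f2_subspace n A1" using A unfolding A1_def f2_subspace_def by (auto simp: bxor_def)
  have f2: "f2_subspace n A2" using A unfolding A2_def f2_subspace_def by (auto simp: bxor_def)
  have "A = {bxor a1 a2 | a1 a2. a1 \<in> A1 \<and> a2 \<in> A2}"
  proof
    show "A \<subseteq> {bxor a1 a2 | a1 a2. a1 \<in> A1 \<and> a2 \<in> A2}"
    proof
      fix a assume a: "a \<in> A"
      have "rst a h \<in> A1" using r a by (auto simp: A1_def rst_def)
      moreover have "bxor a (rst a h) \<in> A2"
      proof -
        have "bxor a (rst a h) \<in> A" using f2_facts(2)[OF A a] r a by blast
        moreover have "\<forall>i. bxor a (rst a h) i \<longrightarrow> i \<notin> h" by (auto simp: bxor_def rst_def)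
        ultimately show ?thesis by (simp add: A2_def)
      qed
      moreover have "a = bxor (rst a h) (bxor a (rst a h))" by (auto simp: bxor_def fun_eq_iff)
      ultimately show "a \<in> {bxor a1 a2 | a1 a2. a1 \<in> A1 \<and> a2 \<in> A2}" by blast
    qed
  next
    show "{bxor a1 a2 | a1 a2. a1 \<in> A1 \<and> a2 \<in> A2} \<subseteq> A"
      using f2_facts(2)[OF A] by (auto simp: A1_def A2_def)
  qed
  then show ?thesis using f1 f2 unfolding splits_on_def A1_def A2_def by blast
qed

lemma Tx_lin: "Tx n V (bxor a a') (bxor b b') = bxor (Tx n V a b) (Tx n V a' b')"
  and Tz_lin: "Tz n V (bxor a a') (bxor b b') = bxor (Tz n V a b) (Tz n V a' b')"
  by (auto simp: Tx_def Tz_def bxor_def ta_def tb_def fun_eq_iff)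

lemma comb:
  assumes A: "f2_subspace n A" and B: "f2_subspace n B" and ns: "non_splitting n A B"
    and TA: "\<forall>a\<in>A. Tx n V a z0 \<in> A \<and> Tz n V a z0 \<in> B"
    and TB: "\<forall>b\<in>B. Tx n V z0 b \<in> A \<and> Tz n V z0 b \<in> B"
    and bv: "u1 \<in> bvecs n" "v1 \<in> bvecs n" "u2 \<in> bvecs n" "v2 \<in> bvecs n"
    and L1: "bxor u1 (Tx n V u1 v1) \<in> A" "bxor v1 (Tz n V u1 v1) \<in> B"
    and L2: "bxor u2 (Tx n V u2 v2) \<in> A" "bxor v2 (Tz n V u2 v2) \<in> B"
    and cA: "\<forall>a\<in>A. \<not> dotp n v1 a \<and> \<not> dotp n v2 a"
    and cB: "\<forall>b\<in>B. \<not> dotp n b u1 \<and> \<not> dotp n b u2"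
    and anti: "dotp n v1 u2 \<noteq> dotp n v2 u1"
  shows "\<forall>i<n. V i \<notin> {VH, VPH, VHP}"
proof -
  have bvA: "a \<in> A \<Longrightarrow> a \<in> bvecs n" for a using A by (simp add: f2_subspace_def subset_iff)
  have bvB: "b \<in> B \<Longrightarrow> b \<in> bvecs n" for b using B by (simp add: f2_subspace_def subset_iff)
  have TS: "Tx n V a b \<in> A \<and> Tz n V a b \<in> B" if "a \<in> A" "b \<in> B" for a b
  proof -
    have "Tx n V a b = bxor (Tx n V a z0) (Tx n V z0 b)" "Tz n V a b = bxor (Tz n V a z0) (Tz n V z0 b)"
      using Tx_lin[of n V a z0 z0 b] Tz_lin[of n V a z0 z0 b] by (simp_all add: bxor_simps)
    then show ?thesis using TA TB that f2_facts(2)[OF A] f2_facts(2)[OF B] by auto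
  qed
  have nsh: "h = {0..<n}" if "h \<noteq> {}" "h \<subseteq> {0..<n}" "\<forall>a\<in>A. rst a h \<in> A" "\<forall>b\<in>B. rst b h \<in> B" for h
    using ns split_lemma[OF A that(3)] split_lemma[OF B that(4)] that(1,2)
    unfolding non_splitting_def by blast
  define h3 where "h3 = {i. i < n \<and> V i \<in> {VPH, VHP}}"
  have case1: False if ne: "h3 \<noteq> {}"
  proof -
    have r1: "rst a h3 \<in> B" if a: "a \<in> A" for a
    proof -
      have "Tz n V (Tx n V a z0) (Tz n V a z0) = rst a h3"
      proof
        fix i show "Tz n V (Tx n V a z0) (Tz n V a z0) i = rst a h3 i"
          using bvA[OF a] by (cases "V i") (auto simp: Tx_def Tz_def ta_def tb_def rst_def h3_def z0_def bvecs_def)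
      qed
      then show ?thesis using TS TA a by metis
    qed
    have r2: "rst b h3 \<in> A" if b: "b \<in> B" for b
    proof -
      have "Tx n V (Tx n V z0 b) (Tz n V z0 b) = rst b h3"
      proof
        fix i show "Tx n V (Tx n V z0 b) (Tz n V z0 b) i = rst b h3 i"
          using bvB[OF b] by (cases "V i") (auto simp: Tx_def Tz_def ta_def tb_def rst_def h3_def z0_def bvecs_def)
      qed
      then show ?thesis using TS TB b by metis
    qed
    have rr: "rst (rst a h) h = rst a h" for a h by (auto simp: rst_def)
    have "h3 = {0..<n}"
    proof (rule nsh[OF ne])
      show "h3 \<subseteq> {0..<n}" by (auto simp: h3_def)
      show "\<forall>a\<in>A. rst a h3 \<in> A" using r1 r2 rr by metis
      show "\<forall>b\<in>B. rst b h3 \<in> B" using r1 r2 rr by metis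
    qed
    then have all3: "\<forall>i<n. V i \<in> {VPH, VHP}"
    proof (intro allI impI)
      fix i assume "h3 = {0..<n}" "i < n"
      then have "i \<in> h3" by simp
      then show "V i \<in> {VPH, VHP}" by (simp add: h3_def)
    qed
    have s1: "bxor (Tx n V u1 v1) u1 \<in> A" "bxor (Tz n V u1 v1) v1 \<in> B"
      using L1 by (simp_all add: bxor_simps(5))
    have "Tx n V (bxor (Tx n V u1 v1) u1) (bxor (Tz n V u1 v1) v1) = u1"
    proof
      fix i show "Tx n V (bxor (Tx n V u1 v1) u1) (bxor (Tz n V u1 v1) v1) i = u1 i"
        using bv(1) all3 by (cases "i < n"; cases "V i") (auto simp: Tx_def Tz_def ta_def tb_def bxor_def bvecs_def)
    qed
    moreover have "Tz n V (bxor (Tx n V u1 v1) u1) (bxor (Tz n V u1 v1) v1) = v1"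
    proof
      fix i show "Tz n V (bxor (Tx n V u1 v1) u1) (bxor (Tz n V u1 v1) v1) i = v1 i"
        using bv(2) all3 by (cases "i < n"; cases "V i") (auto simp: Tx_def Tz_def ta_def tb_def bxor_def bvecs_def)
    qed
    ultimately have "u1 \<in> A" "v1 \<in> B" using TS[OF s1] by auto
    then show False using anti cA cB by auto
  qed
  define h2 where "h2 = {i. i < n \<and> V i = VH}"
  have case2: False if e3: "h3 = {}" and ne: "h2 \<noteq> {}"
  proof -
    have no3: "\<forall>i<n. V i \<notin> {VPH, VHP}" using e3 by (auto simp: h3_def)
    have r1: "rst a h2 \<in> A" if a: "a \<in> A" for a
    proof -
      have "bxor a (Tx n V a z0) = rst a h2"
      proof
        fix i show "bxor a (Tx n V a z0) i = rst a h2 i"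
          using bvA[OF a] no3 by (cases "i < n"; cases "V i") (auto simp: Tx_def ta_def rst_def h2_def z0_def bvecs_def bxor_def)
      qed
      then show ?thesis using TA a f2_facts(2)[OF A] by metis
    qed
    have r2: "rst b h2 \<in> B" if b: "b \<in> B" for b
    proof -
      have "bxor b (Tz n V z0 b) = rst b h2"
      proof
        fix i show "bxor b (Tz n V z0 b) i = rst b h2 i"
          using bvB[OF b] no3 by (cases "i < n"; cases "V i") (auto simp: Tz_def tb_def rst_def h2_def z0_def bvecs_def bxor_def)
      qed
      then show ?thesis using TB b f2_facts(2)[OF B] by metis
    qed
    have "h2 = {0..<n}"
      by (rule nsh[OF ne]) (use r1 r2 in \<open>auto simp: h2_def\<close>)
    then have allH: "\<forall>i<n. V i = VH"
    proof (intro allI impI)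
      fix i assume "h2 = {0..<n}" "i < n"
      then have "i \<in> h2" by simp
      then show "V i = VH" by (simp add: h2_def)
    qed
    have TxH: "Tx n V x z = z" if zb: "z \<in> bvecs n" for x z
    proof
      fix i show "Tx n V x z i = z i"
      proof (cases "i < n")
        case True then have "V i = VH" using allH by blast
        then show ?thesis using True by (simp add: Tx_def ta_def)
      next
        case False then show ?thesis using zb by (simp add: Tx_def bvecs_def)
      qed
    qed
    have TzH: "Tz n V x z = x" if xb: "x \<in> bvecs n" for x z
    proof
      fix i show "Tz n V x z i = x i"
      proof (cases "i < n")
        case True then have "V i = VH" using allH by blast
        then show ?thesis using True by (simp add: Tz_def tb_def)
      next
        case False then show ?thesis using xb by (simp add: Tz_def bvecs_def)
      qed
    qed
    have d1: "bxor u1 v1 \<in> B" using L1(2) TzH[OF bv(1)] by (simp add: bxor_simps(5))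
    have d2: "bxor u2 v2 \<in> B" using L2(2) TzH[OF bv(3)] by (simp add: bxor_simps(5))
    have "dotp n v1 u2 = (dotp n u1 u2 \<noteq> dotp n (bxor u1 v1) u2)"
      by (metis bxor_simps(6) dotp_xor_left)
    also have "\<dots> = dotp n u1 u2" using cB d1 by simp
    finally have e1: "dotp n v1 u2 = dotp n u1 u2" .
    have "dotp n v2 u1 = (dotp n u2 u1 \<noteq> dotp n (bxor u2 v2) u1)"
      by (metis bxor_simps(6) dotp_xor_left)
    also have "\<dots> = dotp n u2 u1" using cB d2 by simp
    finally have e2: "dotp n v2 u1 = dotp n u1 u2" by (simp add: dotp_sym)
    show False using anti e1 e2 by simp
  qed
  show ?thesis
  proof (intro allI impI)
    fix i assume i: "i < n"
    show "V i \<notin> {VH, VPH, VHP}"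
    proof
      assume vi: "V i \<in> {VH, VPH, VHP}"
      show False
      proof (cases "h3 = {}")
        case False then show False using case1 by blast
      next
        case True
        then have "V i = VH" using vi i by (auto simp: h3_def)
        then have "h2 \<noteq> {}" using i by (auto simp: h2_def)
        then show False using case2 True by blast
      qed
    qed
  qed
qed



lemma scal_states: "(\<lambda>x. c * app n M \<psi> x) \<in> states n"
  by (simp add: app_def states_def)

lemma Gstab:
  assumes Q: "\<forall>i<n. Q i \<in> {gI, gX, gY, gZ}"
    and G: "G = (\<lambda>x y. c * mat_mult n (tensor n (\<lambda>i. vgate (V i))) (tensor n Q) x y)"
    and c: "c \<noteq> 0" and css: "css_code n A B" and lG: "logical_op n A B G"
    and bv: "\<alpha> \<in> bvecs n" "\<beta> \<in> bvecs n"
    and fx: "\<forall>\<psi>\<in>codespace n A B. app n (monoT n \<alpha> \<beta>) \<psi> = \<psi>"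
  shows "Tx n V \<alpha> \<beta> \<in> A \<and> Tz n V \<alpha> \<beta> \<in> B"
proof -
  obtain lam where lam: "\<forall>\<psi>. app n (monoT n \<alpha> \<beta>) (app n G \<psi>)
           = app n G (\<lambda>x. lam * app n (monoT n (Tx n V \<alpha> \<beta>) (Tz n V \<alpha> \<beta>)) \<psi> x)"
    using G_conj[OF Q G] by blast
  have "\<forall>\<psi>\<in>codespace n A B. app n (\<lambda>x y. lam * monoT n (Tx n V \<alpha> \<beta>) (Tz n V \<alpha> \<beta>) x y) \<psi> = \<psi>"
  proof
    fix \<psi> assume cs: "\<psi> \<in> codespace n A B"
    then have "app n G \<psi> \<in> codespace n A B" using lG by (simp add: logical_op_def)
    then have "app n G \<psi> = app n G (\<lambda>x. lam * app n (monoT n (Tx n V \<alpha> \<beta>) (Tz n V \<alpha> \<beta>)) \<psi> x)"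
      using fx lam by metis
    then have e: "app n G (\<lambda>x. lam * app n (monoT n (Tx n V \<alpha> \<beta>) (Tz n V \<alpha> \<beta>)) \<psi> x) = app n G \<psi>"
      by simp
    have st: "\<psi> \<in> states n" using cs by (simp add: codespace_def)
    have "(\<lambda>x. lam * app n (monoT n (Tx n V \<alpha> \<beta>) (Tz n V \<alpha> \<beta>)) \<psi> x) = \<psi>"
      by (rule G_inj[OF Q G c scal_states st e])
    then show "app n (\<lambda>x y. lam * monoT n (Tx n V \<alpha> \<beta>) (Tz n V \<alpha> \<beta>) x y) \<psi> = \<psi>"
      by (simp add: app_scal)
  qed
  then show ?thesis using fixing[OF css Tx_bvecs Tz_bvecs] by blast
qed

lemma Gfix:
  assumes Q: "\<forall>i<n. Q i \<in> {gI, gX, gY, gZ}"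
    and G: "G = (\<lambda>x y. c * mat_mult n (tensor n (\<lambda>i. vgate (V i))) (tensor n Q) x y)"
    and c: "c \<noteq> 0" and css: "css_code n A B"
    and s: "s \<noteq> 0" and bv: "u \<in> bvecs n" "v \<in> bvecs n"
    and cm: "\<forall>\<psi>\<in>codespace n A B. app n G (app n (\<lambda>x y. s * monoT n u v x y) \<psi>)
                = app n (\<lambda>x y. s * monoT n u v x y) (app n G \<psi>)"
  shows "bxor u (Tx n V u v) \<in> A \<and> bxor v (Tz n V u v) \<in> B"
proof -
  obtain lam where lam: "\<forall>\<psi>. app n (monoT n u v) (app n G \<psi>)
           = app n G (\<lambda>x. lam * app n (monoT n (Tx n V u v) (Tz n V u v)) \<psi> x)"
    using G_conj[OF Q G] by blast
  have "\<forall>\<psi>\<in>codespace n A B. app n (\<lambda>x y. s * monoT n u v x y) \<psi>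
      = app n (\<lambda>x y. (s * lam) * monoT n (Tx n V u v) (Tz n V u v) x y) \<psi>"
  proof
    fix \<psi> assume cs: "\<psi> \<in> codespace n A B"
    have "app n (\<lambda>x y. s * monoT n u v x y) (app n G \<psi>)
        = (\<lambda>x. s * app n G (\<lambda>x. lam * app n (monoT n (Tx n V u v) (Tz n V u v)) \<psi> x) x)"
      unfolding app_scal using lam by simp
    also have "\<dots> = app n G (\<lambda>x. s * (lam * app n (monoT n (Tx n V u v) (Tz n V u v)) \<psi> x))"
      unfolding app_vscal ..
    also have "\<dots> = app n G (app n (\<lambda>x y. (s * lam) * monoT n (Tx n V u v) (Tz n V u v) x y) \<psi>)"
      unfolding app_scal by (simp add: mult.assoc)
    finally have "app n G (app n (\<lambda>x y. s * monoT n u v x y) \<psi>)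
        = app n G (app n (\<lambda>x y. (s * lam) * monoT n (Tx n V u v) (Tz n V u v) x y) \<psi>)"
      using cm cs by simp
    then show "app n (\<lambda>x y. s * monoT n u v x y) \<psi>
      = app n (\<lambda>x y. (s * lam) * monoT n (Tx n V u v) (Tz n V u v) x y) \<psi>"
      using G_inj[OF Q G c app_states app_states] by blast
  qed
  then show ?thesis using eqfix[OF css s bv Tx_bvecs Tz_bvecs] by blast
qed

lemma pcomm:
  assumes css: "css_code n A B"
    and bv: "u1 \<in> bvecs n" "u2 \<in> bvecs n"
    and s: "s1 * s2 \<noteq> 0"
    and eq: "app n (\<lambda>x y. s1 * monoT n u1 v1 x y) (app n (\<lambda>x y. s2 * monoT n u2 v2 x y) (cs n A z0))
      = (\<lambda>x. e * app n (\<lambda>x y. s2 * monoT n u2 v2 x y) (app n (\<lambda>x y. s1 * monoT n u1 v1 x y) (cs n A z0)) x)"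
  shows "sgp n v1 u2 = e * sgp n v2 u1"
proof -
  have A: "f2_subspace n A" using css by (simp add: css_code_def)
  define \<gamma> where "\<gamma> = bxor u1 u2"
  have g: "\<gamma> \<in> bvecs n" using bv by (simp add: \<gamma>_def bxor_bvecs)
  have val: "app n (monoT n \<gamma> \<delta>) (cs n A z0) \<gamma> = 1" for \<delta>
    unfolding app_monoT[OF g] using g f2_facts(1)[OF A]
    by (simp add: bxor_simps cs_def z0_bvecs sgp_def z0_def bvecs_def)
  have g2: "bxor u2 u1 = \<gamma>" by (simp add: \<gamma>_def bxor_simps)
  have "s1 * (s2 * (sgp n v1 u2 * app n (monoT n \<gamma> (bxor v1 v2)) (cs n A z0) \<gamma>))
     = e * (s2 * (s1 * (sgp n v2 u1 * app n (monoT n \<gamma> (bxor v2 v1)) (cs n A z0) \<gamma>)))"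
    using fun_cong[OF eq, of \<gamma>] unfolding app_scal app_vscal app_mult[symmetric] monoT_mult g2
    by (simp add: \<gamma>_def)
  then show ?thesis using s unfolding val by (simp add: field_simps)
qed



lemma pauli_form:
  assumes "is_pauli n M"
  obtains s u v where "s \<noteq> 0" "u \<in> bvecs n" "v \<in> bvecs n" "M = (\<lambda>x y. s * monoT n u v x y)"
proof -
  obtain m a b where ab: "a \<in> bvecs n" "b \<in> bvecs n"
    "M = (\<lambda>x y. \<i> ^ m * mat_mult n (gpow n gX a) (gpow n gZ b) x y)"
    using assms unfolding is_pauli_def by blast
  then have "M = (\<lambda>x y. \<i> ^ m * monoT n a b x y)" by (simp add: gpow_XZ)
  then show thesis using that[of "\<i> ^ m" a b] ab by simp
qed

lemma G_comm_L:
  assumes hl: "has_logical_action n A B k LX LZ G W"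
    and pc: "\<forall>u\<in>bvecs k. \<forall>v\<in>bvecs k. pauli_coeff k W u v \<noteq> 0 \<longrightarrow> \<not> u j \<and> \<not> v j"
    and LXp: "\<forall>l<k. \<forall>\<phi>\<in>codespace n A B. app n (LX l) \<phi> \<in> codespace n A B"
    and LZp: "\<forall>l<k. \<forall>\<phi>\<in>codespace n A B. app n (LZ l) \<phi> \<in> codespace n A B"
    and Mp: "\<forall>\<phi>\<in>codespace n A B. app n M \<phi> \<in> codespace n A B"
    and cX: "\<forall>l<k. l \<noteq> j \<longrightarrow> (\<forall>\<phi>\<in>codespace n A B. app n (LX l) (app n M \<phi>) = app n M (app n (LX l) \<phi>))"
    and cZ: "\<forall>l<k. l \<noteq> j \<longrightarrow> (\<forall>\<phi>\<in>codespace n A B. app n (LZ l) (app n M \<phi>) = app n M (app n (LZ l) \<phi>))"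
    and c: "\<psi> \<in> codespace n A B"
  shows "app n G (app n M \<psi>) = app n M (app n G \<psi>)"
proof -
  let ?C = "codespace n A B"
  have act: "app n G \<phi> = (\<lambda>x. \<Sum>u\<in>bvecs k. \<Sum>v\<in>bvecs k. pauli_coeff k W u v * logical_pauli_app n k LX LZ u v \<phi> x)"
    if "\<phi> \<in> ?C" for \<phi> using hl that by (simp add: has_logical_action_def)
  have trm: "pauli_coeff k W u v * logical_pauli_app n k LX LZ u v (app n M \<psi>) x
      = pauli_coeff k W u v * app n M (logical_pauli_app n k LX LZ u v \<psi>) x"
    if uv: "u \<in> bvecs k" "v \<in> bvecs k" for u v x
  proof (cases "pauli_coeff k W u v = 0")
    case False
    then have nj: "\<not> u j" "\<not> v j" using pc uv by auto
    have cmZ: "\<forall>l<k. v l \<longrightarrow> (\<forall>\<phi>\<in>?C. app n (LZ l) (app n M \<phi>) = app n M (app n (LZ l) \<phi>))"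
      using cZ nj by metis
    have cmX: "\<forall>l<k. u l \<longrightarrow> (\<forall>\<phi>\<in>?C. app n (LX l) (app n M \<phi>) = app n M (app n (LX l) \<phi>))"
      using cX nj by metis
    have z: "lprod n LZ v k (app n M \<psi>) = app n M (lprod n LZ v k \<psi>)"
      using lprod_comm[OF LZp c cmZ] by simp
    have zc: "lprod n LZ v k \<psi> \<in> ?C" using lprod_pres[OF LZp c] by simp
    have x: "lprod n LX u k (app n M (lprod n LZ v k \<psi>)) = app n M (lprod n LX u k (lprod n LZ v k \<psi>))"
      using lprod_comm[OF LXp zc cmX] by simp
    show ?thesis unfolding logical_pauli_app_def z x ..
  qed simp
  have "app n G (app n M \<psi>) = (\<lambda>x. \<Sum>u\<in>bvecs k. \<Sum>v\<in>bvecs k. pauli_coeff k W u v * logical_pauli_app n k LX LZ u v (app n M \<psi>) x)"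
    using act Mp c by blast
  also have "\<dots> = (\<lambda>x. \<Sum>u\<in>bvecs k. \<Sum>v\<in>bvecs k. pauli_coeff k W u v * app n M (logical_pauli_app n k LX LZ u v \<psi>) x)"
    using trm by (intro ext sum.cong refl) auto
  also have "\<dots> = app n M (app n G \<psi>)"
    unfolding act[OF c] by (simp add: app_vsum2 finite_bvecs)
  finally show ?thesis .
qed

theorem proposition8:
  fixes n k p :: nat and A B :: "bits set" and LX LZ :: "nat \<Rightarrow> qmat"
    and U :: qmat and I :: "nat list set"
    and V :: "nat \<Rightarrow> vlabel" and Q :: "nat \<Rightarrow> gate" and c :: complex and G :: qmat
  assumes css: "css_code n A B"
    and nonsplit: "non_splitting n A B"
    and lpaulis: "logical_paulis n A B k LX LZ"
    and p_pos: "1 \<le> p"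
    and U_unitary: "unitary p U"
    and I_ok: "addr_set k p I"
    and Q_pauli: "\<forall>i<n. Q i \<in> {gI, gX, gY, gZ}"
    and c_phase: "cmod c = 1"
    and G_def: "G = (\<lambda>x y. c * mat_mult n (tensor n (\<lambda>i. vgate (V i))) (tensor n Q) x y)"
    and realizes: "has_logical_action n A B k LX LZ G (addr_target k p U I)"
  shows "\<forall>i<n. V i \<notin> {VH, VPH, VHP}"
proof -
  let ?C = "codespace n A B"
  have c0: "c \<noteq> 0" using c_phase by auto
  have A: "f2_subspace n A" and B: "f2_subspace n B" using css by (auto simp: css_code_def)
  have bvA: "a \<in> A \<Longrightarrow> a \<in> bvecs n" for a using A by (simp add: f2_subspace_def subset_iff)
  have bvB: "b \<in> B \<Longrightarrow> b \<in> bvecs n" for b using B by (simp add: f2_subspace_def subset_iff)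
  have lG: "logical_op n A B G" using realizes by (simp add: has_logical_action_def)
  have TA: "\<forall>a\<in>A. Tx n V a z0 \<in> A \<and> Tz n V a z0 \<in> B"
  proof
    fix a assume a: "a \<in> A"
    have "\<forall>\<psi>\<in>?C. app n (monoT n a z0) \<psi> = \<psi>"
      using a by (simp add: codespace_def gpow_X[symmetric])
    then show "Tx n V a z0 \<in> A \<and> Tz n V a z0 \<in> B"
      using Gstab[OF Q_pauli G_def c0 css lG bvA[OF a] z0_bvecs] by blast
  qed
  have TB: "\<forall>b\<in>B. Tx n V z0 b \<in> A \<and> Tz n V z0 b \<in> B"
  proof
    fix b assume b: "b \<in> B"
    have "\<forall>\<psi>\<in>?C. app n (monoT n z0 b) \<psi> = \<psi>"
      using b by (simp add: codespace_def gpow_Z[symmetric])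
    then show "Tx n V z0 b \<in> A \<and> Tz n V z0 b \<in> B"
      using Gstab[OF Q_pauli G_def c0 css lG z0_bvecs bvB[OF b]] by blast
  qed
  have cov: "(\<Union>t\<in>I. set t) \<subseteq> {0..<k}" using I_ok by (auto simp: addr_set_def)
  have ncov: "(\<Union>t\<in>I. set t) \<noteq> {0..<k}" using I_ok by (simp add: addr_set_def)
  obtain j where j: "j < k" "j \<notin> (\<Union>t\<in>I. set t)"
  proof -
    obtain j where "j \<in> {0..<k}" "j \<notin> (\<Union>t\<in>I. set t)" using cov ncov by blast
    then show thesis using that by simp
  qed
  have pc: "\<forall>u\<in>bvecs k. \<forall>v\<in>bvecs k. pauli_coeff k (addr_target k p U I) u v \<noteq> 0 \<longrightarrow> \<not> u j \<and> \<not> v j"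
    using pc_zero[OF I_ok j] by blast
  have LP: "\<forall>j<k. is_pauli n (LX j) \<and> is_pauli n (LZ j) \<and> logical_op n A B (LX j) \<and> logical_op n A B (LZ j)"
    and rel: "\<forall>\<psi>\<in>?C. \<forall>j<k.
        app n (LX j) (app n (LX j) \<psi>) = \<psi> \<and>
        app n (LZ j) (app n (LZ j) \<psi>) = \<psi> \<and>
        app n (LX j) (app n (LZ j) \<psi>) = - app n (LZ j) (app n (LX j) \<psi>) \<and>
        (\<forall>l<k. l \<noteq> j \<longrightarrow>
           app n (LX j) (app n (LX l) \<psi>) = app n (LX l) (app n (LX j) \<psi>) \<and>
           app n (LZ j) (app n (LZ l) \<psi>) = app n (LZ l) (app n (LZ j) \<psi>) \<and>
           app n (LX j) (app n (LZ l) \<psi>) = app n (LZ l) (app n (LX j) \<psi>))"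
    using lpaulis unfolding logical_paulis_def by blast+
  have LXp: "\<forall>l<k. \<forall>\<phi>\<in>?C. app n (LX l) \<phi> \<in> ?C" and LZp: "\<forall>l<k. \<forall>\<phi>\<in>?C. app n (LZ l) \<phi> \<in> ?C"
    using LP by (auto simp: logical_op_def)
  have cmX: "\<forall>\<psi>\<in>?C. app n G (app n (LX j) \<psi>) = app n (LX j) (app n G \<psi>)"
  proof
    fix \<psi> assume c: "\<psi> \<in> ?C"
    show "app n G (app n (LX j) \<psi>) = app n (LX j) (app n G \<psi>)"
    proof (rule G_comm_L[OF realizes pc LXp LZp _ _ _ c])
      show "\<forall>\<phi>\<in>?C. app n (LX j) \<phi> \<in> ?C" using LXp j(1) by blast
      show "\<forall>l<k. l \<noteq> j \<longrightarrow> (\<forall>\<phi>\<in>?C. app n (LX l) (app n (LX j) \<phi>) = app n (LX j) (app n (LX l) \<phi>))"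
      proof (intro allI impI ballI)
        fix l \<phi> assume l: "l < k" "l \<noteq> j" and p: "\<phi> \<in> ?C"
        show "app n (LX l) (app n (LX j) \<phi>) = app n (LX j) (app n (LX l) \<phi>)"
          using rel[rule_format, OF p j(1)] l by simp
      qed
      show "\<forall>l<k. l \<noteq> j \<longrightarrow> (\<forall>\<phi>\<in>?C. app n (LZ l) (app n (LX j) \<phi>) = app n (LX j) (app n (LZ l) \<phi>))"
      proof (intro allI impI ballI)
        fix l \<phi> assume l: "l < k" "l \<noteq> j" and p: "\<phi> \<in> ?C"
        show "app n (LZ l) (app n (LX j) \<phi>) = app n (LX j) (app n (LZ l) \<phi>)"
          using rel[rule_format, OF p j(1)] l by simp
      qed
    qed
  qed
  have cmZ: "\<forall>\<psi>\<in>?C. app n G (app n (LZ j) \<psi>) = app n (LZ j) (app n G \<psi>)"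
  proof
    fix \<psi> assume c: "\<psi> \<in> ?C"
    show "app n G (app n (LZ j) \<psi>) = app n (LZ j) (app n G \<psi>)"
    proof (rule G_comm_L[OF realizes pc LXp LZp _ _ _ c])
      show "\<forall>\<phi>\<in>?C. app n (LZ j) \<phi> \<in> ?C" using LZp j(1) by blast
      show "\<forall>l<k. l \<noteq> j \<longrightarrow> (\<forall>\<phi>\<in>?C. app n (LX l) (app n (LZ j) \<phi>) = app n (LZ j) (app n (LX l) \<phi>))"
      proof (intro allI impI ballI)
        fix l \<phi> assume l: "l < k" "l \<noteq> j" and p: "\<phi> \<in> ?C"
        have "j \<noteq> l" using l by simp
        then show "app n (LX l) (app n (LZ j) \<phi>) = app n (LZ j) (app n (LX l) \<phi>)"
          using rel[rule_format, OF p l(1)] j(1) by simp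
      qed
      show "\<forall>l<k. l \<noteq> j \<longrightarrow> (\<forall>\<phi>\<in>?C. app n (LZ l) (app n (LZ j) \<phi>) = app n (LZ j) (app n (LZ l) \<phi>))"
      proof (intro allI impI ballI)
        fix l \<phi> assume l: "l < k" "l \<noteq> j" and p: "\<phi> \<in> ?C"
        show "app n (LZ l) (app n (LZ j) \<phi>) = app n (LZ j) (app n (LZ l) \<phi>)"
          using rel[rule_format, OF p j(1)] l by simp
      qed
    qed
  qed
  obtain s1 u1 v1 where P1: "s1 \<noteq> 0" "u1 \<in> bvecs n" "v1 \<in> bvecs n" "LX j = (\<lambda>x y. s1 * monoT n u1 v1 x y)"
    using pauli_form LP j(1) by metis
  obtain s2 u2 v2 where P2: "s2 \<noteq> 0" "u2 \<in> bvecs n" "v2 \<in> bvecs n" "LZ j = (\<lambda>x y. s2 * monoT n u2 v2 x y)"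
    using pauli_form LP j(1) by metis
  have L1: "bxor u1 (Tx n V u1 v1) \<in> A \<and> bxor v1 (Tz n V u1 v1) \<in> B"
    using Gfix[OF Q_pauli G_def c0 css P1(1-3)] cmX P1(4) by simp
  have L2: "bxor u2 (Tx n V u2 v2) \<in> A \<and> bxor v2 (Tz n V u2 v2) \<in> B"
    using Gfix[OF Q_pauli G_def c0 css P2(1-3)] cmZ P2(4) by simp
  define \<psi>0 where "\<psi>0 = cs n A z0"
  have c0C: "\<psi>0 \<in> ?C" unfolding \<psi>0_def by (rule cs_code[OF css z0_bvecs]) (simp add: dotp_z0)
  have one: "app n (\<lambda>x y. 1 * M x y) = app n M" for M by simp
  have stabcomm: "sgp n vv a = 1 \<and> sgp n b uu = 1"
    if a: "a \<in> A" and b: "b \<in> B" and L: "L = (\<lambda>x y. s * monoT n uu vv x y)" "s \<noteq> 0" "uu \<in> bvecs n"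
      and Lp: "\<forall>\<phi>\<in>?C. app n L \<phi> \<in> ?C" for a b L s uu vv
  proof
    have fixa: "app n (monoT n a z0) \<phi> = \<phi>" if "\<phi> \<in> ?C" for \<phi>
      using a that by (simp add: codespace_def gpow_X[symmetric])
    have sc: "1 * s \<noteq> 0" using L(2) by simp
    have eqa: "app n (\<lambda>x y. 1 * monoT n a z0 x y) (app n (\<lambda>x y. s * monoT n uu vv x y) \<psi>0)
      = (\<lambda>x. 1 * app n (\<lambda>x y. s * monoT n uu vv x y) (app n (\<lambda>x y. 1 * monoT n a z0 x y) \<psi>0) x)"
      unfolding one using fixa Lp c0C L(1) by simp
    have "sgp n z0 uu = 1 * sgp n vv a"
      using pcomm[OF css bvA[OF a] L(3) sc eqa[unfolded \<psi>0_def]] .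
    then show "sgp n vv a = 1" by (simp add: sgp_def z0_def)
    have fixb: "app n (monoT n z0 b) \<phi> = \<phi>" if "\<phi> \<in> ?C" for \<phi>
      using b that by (simp add: codespace_def gpow_Z[symmetric])
    have eqb: "app n (\<lambda>x y. 1 * monoT n z0 b x y) (app n (\<lambda>x y. s * monoT n uu vv x y) \<psi>0)
      = (\<lambda>x. 1 * app n (\<lambda>x y. s * monoT n uu vv x y) (app n (\<lambda>x y. 1 * monoT n z0 b x y) \<psi>0) x)"
      unfolding one using fixb Lp c0C L(1) by simp
    have "sgp n b uu = 1 * sgp n vv z0"
      using pcomm[OF css z0_bvecs L(3) sc eqb[unfolded \<psi>0_def]] .
    then show "sgp n b uu = 1" by (simp add: sgp_def z0_def)
  qed
  have LXp1: "\<forall>\<phi>\<in>?C. app n (LX j) \<phi> \<in> ?C" and LZp1: "\<forall>\<phi>\<in>?C. app n (LZ j) \<phi> \<in> ?C"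
    using LXp LZp j(1) by auto
  have cA: "\<forall>a\<in>A. \<not> dotp n v1 a \<and> \<not> dotp n v2 a"
  proof
    fix a assume a: "a \<in> A"
    have "sgp n v1 a = 1" "sgp n v2 a = 1"
      using stabcomm[OF a f2_facts(1)[OF B] P1(4,1,2) LXp1] stabcomm[OF a f2_facts(1)[OF B] P2(4,1,2) LZp1]
      by auto
    then show "\<not> dotp n v1 a \<and> \<not> dotp n v2 a" by (simp_all add: sgp_dotp split: if_splits)
  qed
  have cB: "\<forall>b\<in>B. \<not> dotp n b u1 \<and> \<not> dotp n b u2"
  proof
    fix b assume b: "b \<in> B"
    have "sgp n b u1 = 1" "sgp n b u2 = 1"
      using stabcomm[OF f2_facts(1)[OF A] b P1(4,1,2) LXp1] stabcomm[OF f2_facts(1)[OF A] b P2(4,1,2) LZp1]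
      by auto
    then show "\<not> dotp n b u1 \<and> \<not> dotp n b u2" by (simp_all add: sgp_dotp split: if_splits)
  qed
  have "app n (LX j) (app n (LZ j) \<psi>0) = - app n (LZ j) (app n (LX j) \<psi>0)"
    using rel c0C j(1) by blast
  then have eqq: "app n (\<lambda>x y. s1 * monoT n u1 v1 x y) (app n (\<lambda>x y. s2 * monoT n u2 v2 x y) \<psi>0)
     = (\<lambda>x. (-1) * app n (\<lambda>x y. s2 * monoT n u2 v2 x y) (app n (\<lambda>x y. s1 * monoT n u1 v1 x y) \<psi>0) x)"
    unfolding P1(4) P2(4) by (simp add: fun_eq_iff)
  have s12: "s1 * s2 \<noteq> 0" using P1(1) P2(1) by simp
  have "sgp n v1 u2 = (-1) * sgp n v2 u1"
    using pcomm[OF css P1(2) P2(2) s12 eqq[unfolded \<psi>0_def]] .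
  then have anti: "dotp n v1 u2 \<noteq> dotp n v2 u1"
    by (auto simp: sgp_dotp split: if_splits)
  show ?thesis
    by (rule comb[OF A B nonsplit TA TB P1(2,3) P2(2,3)]) (use L1 L2 cA cB anti in auto)
qed

end
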